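(* Let $X$ and $Y$ be nontrivial real Banach spaces. (a) If $X^*$ has the weak$^*$ diameter $2$ property, then $(X\oplus_1 Y)^*$ has the weak$^*$ diameter $2$ property. (b) If $X^*$ and $Y^*$ have the weak$^*$ diameter $2$ property and $1<p\leq\infty$, then $(X\oplus_p Y)^*$ has the weak$^*$ diameter $2$ property. (c) If $(X\oplus_p Y)^*$ has the weak$^*$ diameter $2$ property, where $1<p\leq\infty$, then $X^*$ has the weak$^*$ diameter $2$ property.
   Context: For $1\le p<\infty$, $X\oplus_p Y$ is $X\times Y$ with norm $(\|x\|^p+\|y\|^p)^{1/p}$; $X\oplus_\infty Y$ has norm $\max\{\|x\|,\|y\|\}$. For a Banach space $Z$, $Z^*$ has the weak$^*$ diameter $2$ property if every nonempty relatively weak$^*$ open subset of the closed unit ball $B_{Z^*}$ has diameter $2$. *)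

theory Defs
  imports "HOL-Analysis.Analysis"
begin

definition psum_norm :: "ereal \<Rightarrow> ('a::real_normed_vector \<times> 'b::real_normed_vector) \<Rightarrow> real" where
  "psum_norm p z =
     (if p = \<infinity> then max (norm (fst z)) (norm (snd z))
      else (norm (fst z) powr real_of_ereal p + norm (snd z) powr real_of_ereal p)
             powr (1 / real_of_ereal p))"

text \<open>For a real vector space with norm N: the closed unit ball of the dual space
  (continuous linear functionals of dual norm at most 1), as a subset of 'v \<Rightarrow> real.\<close>
definition dual_ball :: "('v::real_vector \<Rightarrow> real) \<Rightarrow> ('v \<Rightarrow> real) set" where
  "dual_ball N = {f. linear f \<and> (\<forall>x. \<bar>f x\<bar> \<le> N x)}"

definition dual_norm :: "('v::real_vector \<Rightarrow> real) \<Rightarrow> ('v \<Rightarrow> real) \<Rightarrow> real" where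
  "dual_norm N f = Sup {\<bar>f x\<bar> | x. N x \<le> 1}"

definition dual_diam :: "('v::real_vector \<Rightarrow> real) \<Rightarrow> ('v \<Rightarrow> real) set \<Rightarrow> real" where
  "dual_diam N S = Sup {dual_norm N (f - g) | f g. f \<in> S \<and> g \<in> S}"

text \<open>Weak* diameter 2 property of the dual: the weak* topology on the dual is the
  restriction of the topology of pointwise convergence (product topology on 'v \<Rightarrow> real).\<close>
definition wstar_d2p :: "('v::real_vector \<Rightarrow> real) \<Rightarrow> bool" where
  "wstar_d2p N \<longleftrightarrow>
     (\<forall>U :: ('v \<Rightarrow> real) set. open U \<and> U \<inter> dual_ball N \<noteq> {} \<longrightarrow>
        dual_diam N (U \<inter> dual_ball N) = 2)"

end

theory Submission
  imports Defs
begin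


lemma open_basic:
  fixes f0 :: "'v \<Rightarrow> real"
  assumes "finite F"
  shows "open {f. \<forall>x\<in>F. \<bar>f x - f0 x\<bar> < e}"
proof -
  have b: "{y. \<bar>y - c\<bar> < e} = ball c e" for c :: real by (auto simp: dist_real_def abs_minus_commute)
  have "open {f::'v\<Rightarrow>real. \<forall>i\<in>F. f (id i) \<in> {y. \<bar>y - f0 i\<bar> < e}}"
    by (rule product_topology_basis') (auto simp only: b intro: assms)
  then show ?thesis by simp
qed

lemma open_nbhd:
  fixes U :: "('v \<Rightarrow> real) set"
  assumes "open U" "f0 \<in> U"
  shows "\<exists>F e. finite F \<and> e > 0 \<and> {f. \<forall>x\<in>F. \<bar>f x - f0 x\<bar> < e} \<subseteq> U"
proof -
  have "openin (product_topology (\<lambda>i. euclidean) UNIV) U"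
    using assms unfolding open_fun_def by auto
  from product_topology_open_contains_basis[OF this assms(2)]
  obtain X where H: "f0 \<in> Pi\<^sub>E UNIV X" "\<And>i. open (X i)" "finite {i. X i \<noteq> UNIV}" "Pi\<^sub>E UNIV X \<subseteq> U"
    by auto
  define F where "F = {i. X i \<noteq> UNIV}"
  have "\<forall>i. \<exists>r>0. ball (f0 i) r \<subseteq> X i"
    using H(1,2) open_contains_ball by (metis PiE_E UNIV_I)
  then obtain r where r: "\<And>i. r i > 0" "\<And>i. ball (f0 i) (r i) \<subseteq> X i" by metis
  define e where "e = Min (insert 1 (r ` F))"
  have fin: "finite F" using H(3) F_def by simp
  have e0: "e > 0" unfolding e_def using fin r(1) by (subst Min_gr_iff) auto
  have ele: "e \<le> r i" if "i \<in> F" for i unfolding e_def using fin that by (intro Min_le) auto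
  have "{f. \<forall>x\<in>F. \<bar>f x - f0 x\<bar> < e} \<subseteq> Pi\<^sub>E UNIV X"
  proof
    fix f assume f: "f \<in> {f. \<forall>x\<in>F. \<bar>f x - f0 x\<bar> < e}"
    have "f i \<in> X i" for i
    proof (cases "i \<in> F")
      case True
      then have "\<bar>f i - f0 i\<bar> < r i" using f ele[OF True] by auto
      then show ?thesis using r(2)[of i] by (auto simp: dist_real_def abs_minus_commute)
    next
      case False then show ?thesis by (auto simp: F_def)
    qed
    then show "f \<in> Pi\<^sub>E UNIV X" by auto
  qed
  then have "{f. \<forall>x\<in>F. \<bar>f x - f0 x\<bar> < e} \<subseteq> U" using H(4) by (rule subset_trans)
  then show ?thesis using fin e0 by blast
qed

lemma dn_upper:
  assumes "N z \<le> 1" and "\<And>x. N x \<le> 1 \<Longrightarrow> \<bar>h x\<bar> \<le> C"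
  shows "\<bar>h z\<bar> \<le> dual_norm N h"
  unfolding dual_norm_def
  by (rule cSup_upper) (use assms in \<open>auto intro!: bdd_aboveI[where M=C]\<close>)

lemma dn_least:
  assumes "N 0 \<le> 1" "h 0 = 0" and "\<And>x. N x \<le> 1 \<Longrightarrow> \<bar>h x\<bar> \<le> C"
  shows "dual_norm N h \<le> C"
  unfolding dual_norm_def
  by (rule cSup_least) (use assms in auto)

lemma dn_diff_le2:
  assumes "N 0 = 0" "f \<in> dual_ball N" "g \<in> dual_ball N"
  shows "dual_norm N (f - g) \<le> 2"
proof (rule dn_least)
  show "N 0 \<le> 1" using assms by simp
  show "(f - g) 0 = 0" using assms by (simp add: dual_ball_def linear_0)
  fix x assume "N x \<le> 1"
  moreover have "\<bar>f x\<bar> \<le> N x" "\<bar>g x\<bar> \<le> N x" using assms(2,3) by (auto simp: dual_ball_def)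
  ultimately show "\<bar>(f - g) x\<bar> \<le> 2" by simp
qed

lemma d2p_intro:
  assumes N0: "N 0 = 0"
    and main: "\<And>f0 F e \<eta>. f0 \<in> dual_ball N \<Longrightarrow> finite F \<Longrightarrow> e > 0 \<Longrightarrow> \<eta> > 0 \<Longrightarrow>
      \<exists>f1\<in>dual_ball N. \<exists>f2\<in>dual_ball N. (\<forall>x\<in>F. \<bar>f1 x - f0 x\<bar> < e \<and> \<bar>f2 x - f0 x\<bar> < e)
         \<and> (\<exists>z. N z \<le> 1 \<and> f1 z - f2 z > 2 - \<eta>)"
  shows "wstar_d2p N"
  unfolding wstar_d2p_def
proof (intro allI impI)
  fix U :: "('a \<Rightarrow> real) set"
  assume "open U \<and> U \<inter> dual_ball N \<noteq> {}"
  then obtain f0 where U: "open U" and f0: "f0 \<in> U" "f0 \<in> dual_ball N" by auto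
  obtain F e where Fe: "finite F" "e > 0" "{f. \<forall>x\<in>F. \<bar>f x - f0 x\<bar> < e} \<subseteq> U"
    using open_nbhd[OF U f0(1)] by auto
  let ?S = "{dual_norm N (f - g) |f g. f \<in> U \<inter> dual_ball N \<and> g \<in> U \<inter> dual_ball N}"
  show "dual_diam N (U \<inter> dual_ball N) = 2"
    unfolding dual_diam_def
  proof (rule cSup_eq_non_empty)
    show "?S \<noteq> {}" using f0 by blast
    show "x \<le> 2" if "x \<in> ?S" for x using that dn_diff_le2[of N, OF N0] by auto
    fix y assume y: "\<And>x. x \<in> ?S \<Longrightarrow> x \<le> y"
    show "2 \<le> y"
    proof (rule ccontr)
      assume "\<not> 2 \<le> y"
      then obtain f1 f2 z where f12: "f1 \<in> dual_ball N" "f2 \<in> dual_ball N"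
        "\<forall>x\<in>F. \<bar>f1 x - f0 x\<bar> < e \<and> \<bar>f2 x - f0 x\<bar> < e" and z: "N z \<le> 1" "f1 z - f2 z > y"
        using main[OF f0(2) Fe(1,2), of "2 - y"] by auto
      have inU: "f1 \<in> U" "f2 \<in> U" using f12(3) Fe(3) by auto
      have "\<bar>(f1 - f2) z\<bar> \<le> dual_norm N (f1 - f2)"
      proof (rule dn_upper[of N, OF z(1), where C=2])
        fix x assume "N x \<le> 1"
        moreover have "\<bar>f1 x\<bar> \<le> N x" "\<bar>f2 x\<bar> \<le> N x" using f12(1,2) by (auto simp: dual_ball_def)
        ultimately show "\<bar>(f1 - f2) x\<bar> \<le> 2" by simp
      qed
      moreover have "dual_norm N (f1 - f2) \<le> y" by (rule y) (use inU f12 in blast)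
      ultimately show False using z by simp
    qed
  qed
qed

lemma d2p_elim:
  assumes "wstar_d2p N" "N 0 = 0" "f0 \<in> dual_ball N" "finite F" "e > 0" "\<eta> > 0"
  shows "\<exists>f1\<in>dual_ball N. \<exists>f2\<in>dual_ball N. (\<forall>x\<in>F. \<bar>f1 x - f0 x\<bar> < e \<and> \<bar>f2 x - f0 x\<bar> < e)
         \<and> (\<exists>z. N z \<le> 1 \<and> f1 z - f2 z > 2 - \<eta>)"
proof -
  define U where "U = {f. \<forall>x\<in>F. \<bar>f x - f0 x\<bar> < e}"
  have "open U" unfolding U_def by (rule open_basic[OF assms(4)])
  moreover have "f0 \<in> U" using assms(5) by (simp add: U_def)
  ultimately have d: "dual_diam N (U \<inter> dual_ball N) = 2" using assms(1,3) unfolding wstar_d2p_def by blast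
  let ?S = "{dual_norm N (f - g) |f g. f \<in> U \<inter> dual_ball N \<and> g \<in> U \<inter> dual_ball N}"
  have ne: "?S \<noteq> {}" using \<open>f0 \<in> U\<close> assms(3) by blast
  have "2 - \<eta>/2 < Sup ?S" using d assms(6) unfolding dual_diam_def by simp
  from less_cSupD[OF ne this] obtain s where "s \<in> ?S" "2 - \<eta>/2 < s" by blast
  then obtain f1 f2 where f: "f1 \<in> U \<inter> dual_ball N" "f2 \<in> U \<inter> dual_ball N"
     "2 - \<eta>/2 < dual_norm N (f1 - f2)" by blast
  have "\<bar>(f1-f2) 0\<bar> \<in> {\<bar>(f1-f2) x\<bar> | x. N x \<le> 1}" using assms(2) by auto
  then have "{\<bar>(f1-f2) x\<bar> | x. N x \<le> 1} \<noteq> {}" by blast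
  from less_cSupD[OF this] f(3) obtain z where z: "N z \<le> 1" "2 - \<eta>/2 < \<bar>(f1 - f2) z\<bar>"
    unfolding dual_norm_def by auto
  show ?thesis
  proof (cases "(f1 - f2) z \<ge> 0")
    case True
    then have "f1 z - f2 z > 2 - \<eta>" using z assms(6) by simp
    moreover have "\<forall>x\<in>F. \<bar>f1 x - f0 x\<bar> < e \<and> \<bar>f2 x - f0 x\<bar> < e" using f(1,2) by (simp add: U_def)
    ultimately show ?thesis using f(1,2) z(1) by blast
  next
    case False
    then have "f2 z - f1 z > 2 - \<eta>" using z assms(6) by simp
    moreover have "\<forall>x\<in>F. \<bar>f2 x - f0 x\<bar> < e \<and> \<bar>f1 x - f0 x\<bar> < e" using f(1,2) by (simp add: U_def)
    ultimately show ?thesis using f(1,2) z(1) by blast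
  qed
qed




lemma dnn_le:
  fixes h :: "'a::real_normed_vector \<Rightarrow> real"
  assumes "linear h" "\<And>x. \<bar>h x\<bar> \<le> C * norm x"
  shows "\<bar>h x\<bar> \<le> dual_norm norm h * norm x"
proof (cases "x = 0")
  case True then show ?thesis using linear_0[OF assms(1)] by simp
next
  case False
  define z where "z = x /\<^sub>R norm x"
  have nz: "norm z = 1" using False by (simp add: z_def)
  have "\<bar>h z\<bar> \<le> dual_norm norm h"
  proof (rule dn_upper[of norm, where C="\<bar>C\<bar>"])
    show "norm z \<le> 1" using nz by simp
    fix y :: 'a assume "norm y \<le> 1"
    then have "C * norm y \<le> \<bar>C\<bar>"
      by (metis abs_ge_self abs_mult abs_norm_cancel mult.comm_neutral mult_left_mono abs_ge_zero order_trans)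
    then show "\<bar>h y\<bar> \<le> \<bar>C\<bar>" using assms(2)[of y] by linarith
  qed
  moreover have "h z = h x / norm x" unfolding z_def using linear_scale[OF assms(1)] by (simp add: divide_inverse mult.commute)
  ultimately have "\<bar>h x\<bar> / norm x \<le> dual_norm norm h" by simp
  then show ?thesis using False by (simp add: divide_le_eq)
qed

lemma dnn_least:
  fixes h :: "'a::real_normed_vector \<Rightarrow> real"
  assumes "linear h" "\<And>x. \<bar>h x\<bar> \<le> c * norm x" "0 \<le> c"
  shows "dual_norm norm h \<le> c"
proof (rule dn_least[of norm])
  show "norm (0::'a) \<le> 1" by simp
  show "h 0 = 0" using linear_0[OF assms(1)] .
  fix x :: 'a assume "norm x \<le> 1"
  then have "c * norm x \<le> c" using assms(3) by (simp add: mult_left_le)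
  then show "\<bar>h x\<bar> \<le> c" using assms(2)[of x] by linarith
qed

lemma bnd_ball:
  fixes h :: "'a::real_normed_vector \<Rightarrow> real"
  assumes "\<And>x. \<bar>h x\<bar> \<le> C * norm x" "norm y \<le> 1"
  shows "\<bar>h y\<bar> \<le> \<bar>C\<bar>"
proof -
  have "C * norm y \<le> \<bar>C\<bar>" using assms(2)
    by (metis abs_ge_self abs_mult abs_norm_cancel mult.comm_neutral mult_left_mono abs_ge_zero order_trans)
  then show ?thesis using assms(1)[of y] by linarith
qed

lemma dnn_nonneg:
  fixes h :: "'a::real_normed_vector \<Rightarrow> real"
  assumes "linear h" "\<And>x. \<bar>h x\<bar> \<le> C * norm x"
  shows "0 \<le> dual_norm norm h"
proof -
  have "\<bar>h 0\<bar> \<le> dual_norm norm h"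
    by (rule dn_upper[of norm, where C="\<bar>C\<bar>"]) (auto intro: bnd_ball[OF assms(2)])
  then show ?thesis by simp
qed

lemma dnn_near:
  fixes h :: "'a::real_normed_vector \<Rightarrow> real"
  assumes "linear h" "\<And>x. \<bar>h x\<bar> \<le> C * norm x" "\<eta> > 0"
  shows "\<exists>x. norm x \<le> 1 \<and> h x > dual_norm norm h - \<eta>"
proof -
  have "\<bar>h 0\<bar> \<in> {\<bar>h x\<bar> | x. norm x \<le> 1}" by auto
  then have ne: "{\<bar>h x\<bar> | x. norm x \<le> 1} \<noteq> {}" by blast
  have "dual_norm norm h - \<eta> < Sup {\<bar>h x\<bar> | x. norm x \<le> 1}" using assms(3) unfolding dual_norm_def by simp
  from less_cSupD[OF ne this] obtain x where x: "norm x \<le> 1" "dual_norm norm h - \<eta> < \<bar>h x\<bar>" by blast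
  show ?thesis
  proof (cases "h x \<ge> 0")
    case True then show ?thesis using x by auto
  next
    case False
    have "h (-x) = - h x" using linear_neg[OF assms(1)] by simp
    then show ?thesis using x False by (intro exI[of _ "-x"]) auto
  qed
qed

lemma ball_norm_iff: "f \<in> dual_ball norm \<longleftrightarrow> linear f \<and> (\<forall>x. \<bar>f x\<bar> \<le> norm x)"
  by (simp add: dual_ball_def)

lemma ball_bounded: "f \<in> dual_ball norm \<Longrightarrow> \<bar>f x\<bar> \<le> 1 * norm x"
  by (simp add: dual_ball_def)

lemma abs_bnd: "a \<le> C * n \<Longrightarrow> 0 \<le> n \<Longrightarrow> a \<le> \<bar>C\<bar> * n"
  for a C n :: real by (smt (verit) abs_ge_self mult_right_mono)

lemma dnn_lip:
  fixes f0 g :: "'a::real_normed_vector \<Rightarrow> real"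
  assumes "linear f0" "\<And>x. \<bar>f0 x\<bar> \<le> C * norm x" "linear g" "\<And>x. \<bar>g x\<bar> \<le> D * norm x"
  shows "dual_norm norm (\<lambda>x. f0 x + c * g x) \<le> dual_norm norm (\<lambda>x. f0 x + c' * g x) + \<bar>c - c'\<bar> * dual_norm norm g"
proof -
  have lin: "linear (\<lambda>x. f0 x + c * g x)" for c
    using assms(1,3) unfolding linear_iff by (auto simp: algebra_simps)
  have bd: "\<bar>f0 x + c * g x\<bar> \<le> (\<bar>C\<bar> + \<bar>c\<bar> * \<bar>D\<bar>) * norm x" for c x
  proof -
    have "\<bar>f0 x + c * g x\<bar> \<le> \<bar>f0 x\<bar> + \<bar>c\<bar> * \<bar>g x\<bar>" by (simp add: abs_mult abs_triangle_ineq[THEN order_trans])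
    also have "\<dots> \<le> \<bar>C\<bar> * norm x + \<bar>c\<bar> * (\<bar>D\<bar> * norm x)"
      using assms(2,4)[of x] abs_bnd[of "\<bar>f0 x\<bar>" C "norm x"] abs_bnd[of "\<bar>g x\<bar>" D "norm x"]
      by (intro add_mono mult_left_mono) auto
    finally show ?thesis by (simp add: algebra_simps)
  qed
  show ?thesis
  proof (rule dnn_least[OF lin])
    fix x :: 'a
    have "\<bar>f0 x + c * g x\<bar> \<le> \<bar>f0 x + c' * g x\<bar> + \<bar>c - c'\<bar> * \<bar>g x\<bar>"
    proof -
      have "f0 x + c * g x = (f0 x + c' * g x) + (c - c') * g x" by (simp add: algebra_simps)
      then show ?thesis by (metis abs_mult abs_triangle_ineq)
    qed
    also have "\<dots> \<le> dual_norm norm (\<lambda>x. f0 x + c' * g x) * norm x + \<bar>c - c'\<bar> * (dual_norm norm g * norm x)"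
      using dnn_le[OF lin[where c=c'] bd[where c=c'], of x] dnn_le[OF assms(3,4), of x] by (intro add_mono mult_left_mono) auto
    finally show "\<bar>f0 x + c * g x\<bar> \<le> (dual_norm norm (\<lambda>x. f0 x + c' * g x) + \<bar>c - c'\<bar> * dual_norm norm g) * norm x"
      by (simp add: algebra_simps)
  next
    show "0 \<le> dual_norm norm (\<lambda>x. f0 x + c' * g x) + \<bar>c - c'\<bar> * dual_norm norm g"
      using dnn_nonneg[OF lin bd] dnn_nonneg[OF assms(3,4)] by simp
  qed
qed

lemma dnn_cont:
  fixes f0 g :: "'a::real_normed_vector \<Rightarrow> real"
  assumes "linear f0" "\<And>x. \<bar>f0 x\<bar> \<le> C * norm x" "linear g" "\<And>x. \<bar>g x\<bar> \<le> D * norm x"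
  shows "continuous_on S (\<lambda>c. dual_norm norm (\<lambda>x. f0 x + c * g x))"
proof (rule lipschitz_on_continuous_on[where L="dual_norm norm g"], rule lipschitz_onI)
  show "0 \<le> dual_norm norm g" using dnn_nonneg[OF assms(3,4)] .
  fix c c' :: real
  show "dist (dual_norm norm (\<lambda>x. f0 x + c * g x)) (dual_norm norm (\<lambda>x. f0 x + c' * g x)) \<le> dual_norm norm g * dist c c'"
    using dnn_lip[OF assms, of c c'] dnn_lip[OF assms, of c' c]
    by (simp add: dist_real_def abs_minus_commute mult.commute abs_le_iff)
qed

lemma psum_inf: "psum_norm \<infinity> w = max (norm (fst w)) (norm (snd w))"
  by (simp add: psum_norm_def)

lemma psum_fin: "p \<noteq> \<infinity> \<Longrightarrow> psum_norm p w =
   (norm (fst w) powr real_of_ereal p + norm (snd w) powr real_of_ereal p) powr (1 / real_of_ereal p)"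
  by (simp add: psum_norm_def)

lemma psum_1: "psum_norm 1 (x, y) = norm x + norm y"
  by (simp add: psum_norm_def)

lemma real_ereal_ge1:
  assumes "1 \<le> p" "p \<noteq> \<infinity>" shows "1 \<le> real_of_ereal p"
  using assms by (cases p) auto

lemma psum_ge:
  assumes "1 \<le> p"
  shows "norm (fst w) \<le> psum_norm p w" "norm (snd w) \<le> psum_norm p w"
proof -
  have "norm (fst w) \<le> psum_norm p w \<and> norm (snd w) \<le> psum_norm p w"
  proof (cases "p = \<infinity>")
    case True then show ?thesis by (simp add: psum_inf)
  next
    case False
    define P where "P = real_of_ereal p"
    have P1: "1 \<le> P" using real_ereal_ge1[OF assms False] by (simp add: P_def)
    have id: "(u powr P) powr (1/P) = u" if "u \<ge> 0" for u :: real
      using P1 that by (simp add: powr_powr)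
    have "norm (fst w) = (norm (fst w) powr P) powr (1/P)" using id by simp
    also have "\<dots> \<le> (norm (fst w) powr P + norm (snd w) powr P) powr (1/P)"
      using P1 by (intro powr_mono2) auto
    finally have 1: "norm (fst w) \<le> psum_norm p w" using False by (simp add: psum_fin P_def)
    have "norm (snd w) = (norm (snd w) powr P) powr (1/P)" using id by simp
    also have "\<dots> \<le> (norm (fst w) powr P + norm (snd w) powr P) powr (1/P)"
      using P1 by (intro powr_mono2) auto
    finally have 2: "norm (snd w) \<le> psum_norm p w" using False by (simp add: psum_fin P_def)
    show ?thesis using 1 2 by simp
  qed
  then show "norm (fst w) \<le> psum_norm p w" "norm (snd w) \<le> psum_norm p w" by auto
qed

lemma psum_axis:
  assumes "1 \<le> p"
  shows "psum_norm p (x, 0) = norm x" "psum_norm p (0, y) = norm y"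
proof -
  have "psum_norm p (x, 0) = norm x \<and> psum_norm p (0, y) = norm y"
  proof (cases "p = \<infinity>")
    case True then show ?thesis by (simp add: psum_inf)
  next
    case False
    define P where "P = real_of_ereal p"
    have P1: "1 \<le> P" using real_ereal_ge1[OF assms False] by (simp add: P_def)
    have id: "(u powr P) powr (1/P) = u" if "u \<ge> 0" for u :: real
      using P1 that by (simp add: powr_powr)
    show ?thesis using False id by (simp add: psum_fin P_def[symmetric])
  qed
  then show "psum_norm p (x, 0) = norm x" "psum_norm p (0, y) = norm y" by auto
qed

lemma psum_0: "1 \<le> p \<Longrightarrow> psum_norm p 0 = 0"
  using psum_axis(1)[of p 0] by (simp add: zero_prod_def)

lemma lin_split:
  fixes \<Phi> :: "'a::real_vector \<times> 'b::real_vector \<Rightarrow> real"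
  assumes "linear \<Phi>"
  shows "\<Phi> w = \<Phi> (fst w, 0) + \<Phi> (0, snd w)"
proof -
  have "w = (fst w, 0) + (0, snd w)" by simp
  then show ?thesis by (metis linear_add[OF assms])
qed

lemma lin_fst: "linear \<Phi> \<Longrightarrow> linear (\<lambda>x. \<Phi> (x, 0))"
  by (rule linear_compose[of "\<lambda>x. (x,0)", unfolded o_def]) (auto intro: linearI)

lemma lin_snd: "linear \<Phi> \<Longrightarrow> linear (\<lambda>y. \<Phi> (0, y))"
  by (rule linear_compose[of "\<lambda>y. (0,y)", unfolded o_def]) (auto intro: linearI)

lemma lin_comb:
  fixes f :: "'a::real_vector \<Rightarrow> real" and g :: "'b::real_vector \<Rightarrow> real"
  assumes "linear f" "linear g"
  shows "linear (\<lambda>w. a * f (fst w) + b * g (snd w))"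
  using assms by (auto simp: linear_iff algebra_simps)

lemma ball_fst:
  assumes "1 \<le> p" "\<Phi> \<in> dual_ball (psum_norm p)"
  shows "(\<lambda>x. \<Phi> (x, 0)) \<in> dual_ball norm"
proof -
  have "linear \<Phi>" "\<And>w. \<bar>\<Phi> w\<bar> \<le> psum_norm p w" using assms(2) by (auto simp: dual_ball_def)
  then have "linear (\<lambda>x. \<Phi> (x, 0))" "\<And>x. \<bar>\<Phi> (x, 0)\<bar> \<le> norm x"
    using lin_fst psum_axis(1)[OF assms(1)] by metis+
  then show ?thesis unfolding dual_ball_def by simp
qed

lemma ball_snd:
  assumes "1 \<le> p" "\<Phi> \<in> dual_ball (psum_norm p)"
  shows "(\<lambda>y. \<Phi> (0, y)) \<in> dual_ball norm"
proof -
  have "linear \<Phi>" "\<And>w. \<bar>\<Phi> w\<bar> \<le> psum_norm p w" using assms(2) by (auto simp: dual_ball_def)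
  then have "linear (\<lambda>y. \<Phi> (0, y))" "\<And>y. \<bar>\<Phi> (0, y)\<bar> \<le> norm y"
    using lin_snd psum_axis(2)[OF assms(1)] by metis+
  then show ?thesis unfolding dual_ball_def by simp
qed




lemma part_a:
  assumes dX: "wstar_d2p (norm :: 'a::real_normed_vector \<Rightarrow> real)"
  shows "wstar_d2p (psum_norm 1 :: 'a \<times> 'b::real_normed_vector \<Rightarrow> real)"
proof (rule d2p_intro)
  show "psum_norm 1 (0::'a\<times>'b) = 0" by (rule psum_0) simp
  fix \<Phi>0 :: "'a \<times> 'b \<Rightarrow> real" and F :: "('a\<times>'b) set" and e \<eta> :: real
  assume \<Phi>0: "\<Phi>0 \<in> dual_ball (psum_norm 1)" and F: "finite F" and e: "e > 0" and \<eta>: "\<eta> > 0"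
  have lin0: "linear \<Phi>0" using \<Phi>0 by (simp add: dual_ball_def)
  define f0 where "f0 = (\<lambda>x. \<Phi>0 (x, 0))"
  define g0 where "g0 = (\<lambda>y. \<Phi>0 (0, y))"
  have f0b: "f0 \<in> dual_ball norm" unfolding f0_def by (rule ball_fst[OF _ \<Phi>0]) simp
  have g0b: "g0 \<in> dual_ball norm" unfolding g0_def by (rule ball_snd[OF _ \<Phi>0]) simp
  obtain f1 f2 z where f: "f1 \<in> dual_ball norm" "f2 \<in> dual_ball norm"
    "\<forall>x\<in>fst ` F. \<bar>f1 x - f0 x\<bar> < e \<and> \<bar>f2 x - f0 x\<bar> < e" and z: "norm z \<le> 1" "f1 z - f2 z > 2 - \<eta>"
    using d2p_elim[OF dX _ f0b _ e \<eta>, of "fst ` F"] F by auto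
  define \<Phi>1 where "\<Phi>1 = (\<lambda>w::'a\<times>'b. 1 * f1 (fst w) + 1 * g0 (snd w))"
  define \<Phi>2 where "\<Phi>2 = (\<lambda>w::'a\<times>'b. 1 * f2 (fst w) + 1 * g0 (snd w))"
  have inb: "(\<lambda>w::'a\<times>'b. 1 * f (fst w) + 1 * g0 (snd w)) \<in> dual_ball (psum_norm 1)"
    if "f \<in> dual_ball norm" for f
  proof -
    have "linear (\<lambda>w::'a\<times>'b. 1 * f (fst w) + 1 * g0 (snd w))"
      using that g0b by (intro lin_comb) (auto simp: dual_ball_def)
    moreover have "\<bar>1 * f (fst w) + 1 * g0 (snd w)\<bar> \<le> psum_norm 1 w" for w :: "'a\<times>'b"
    proof -
      have "\<bar>f (fst w)\<bar> \<le> norm (fst w)" "\<bar>g0 (snd w)\<bar> \<le> norm (snd w)" using that g0b by (auto simp: dual_ball_def)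
      then show ?thesis using psum_1[of "fst w" "snd w"] by simp
    qed
    ultimately show ?thesis unfolding dual_ball_def by blast
  qed
  have split: "\<Phi>0 w = f0 (fst w) + g0 (snd w)" for w unfolding f0_def g0_def by (rule lin_split[OF lin0])
  show "\<exists>\<Phi>1\<in>dual_ball (psum_norm 1). \<exists>\<Phi>2\<in>dual_ball (psum_norm 1).
          (\<forall>x\<in>F. \<bar>\<Phi>1 x - \<Phi>0 x\<bar> < e \<and> \<bar>\<Phi>2 x - \<Phi>0 x\<bar> < e) \<and> (\<exists>z. psum_norm 1 z \<le> 1 \<and> \<Phi>1 z - \<Phi>2 z > 2 - \<eta>)"
  proof -
    have m1: "\<Phi>1 \<in> dual_ball (psum_norm 1)" unfolding \<Phi>1_def by (rule inb[OF f(1)])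
    have m2: "\<Phi>2 \<in> dual_ball (psum_norm 1)" unfolding \<Phi>2_def by (rule inb[OF f(2)])
    have cl: "\<forall>x\<in>F. \<bar>\<Phi>1 x - \<Phi>0 x\<bar> < e \<and> \<bar>\<Phi>2 x - \<Phi>0 x\<bar> < e"
      using f(3) by (auto simp: \<Phi>1_def \<Phi>2_def split)
    have "psum_norm 1 (z, 0::'b) \<le> 1" using z(1) psum_1[of z "0::'b"] by simp
    moreover have "\<Phi>1 (z, 0) - \<Phi>2 (z, 0) > 2 - \<eta>" using z(2) by (simp add: \<Phi>1_def \<Phi>2_def)
    ultimately have "\<exists>z. psum_norm 1 z \<le> 1 \<and> \<Phi>1 z - \<Phi>2 z > 2 - \<eta>" by blast
    then show ?thesis using m1 m2 cl by blast
  qed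
qed

lemma b_core:
  fixes \<Phi>0 :: "'a::real_normed_vector \<times> 'b::real_normed_vector \<Rightarrow> real"
  assumes dX: "wstar_d2p (norm :: 'a \<Rightarrow> real)" and dY: "wstar_d2p (norm :: 'b \<Rightarrow> real)"
    and M: "\<And>x y. \<alpha> * norm x + \<beta> * norm y \<le> N (x, y)"
    and E: "\<And>x y. norm x \<le> 1 \<Longrightarrow> norm y \<le> 1 \<Longrightarrow> N (s *\<^sub>R x, t *\<^sub>R y) \<le> 1"
    and st: "\<alpha> * s + \<beta> * t = 1" "0 \<le> \<alpha>" "0 \<le> \<beta>" "0 \<le> s" "0 \<le> t"
    and base: "linear \<Phi>0" "\<And>x. \<bar>\<Phi>0 (x, 0)\<bar> \<le> \<alpha> * norm x" "\<And>y. \<bar>\<Phi>0 (0, y)\<bar> \<le> \<beta> * norm y"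
    and F: "finite F" and e: "e > 0" and \<eta>: "\<eta> > 0"
  shows "\<exists>\<Phi>1\<in>dual_ball N. \<exists>\<Phi>2\<in>dual_ball N. (\<forall>w\<in>F. \<bar>\<Phi>1 w - \<Phi>0 w\<bar> < e \<and> \<bar>\<Phi>2 w - \<Phi>0 w\<bar> < e)
            \<and> (\<exists>z. N z \<le> 1 \<and> \<Phi>1 z - \<Phi>2 z > 2 - \<eta>)"
proof -
  define f0 where "f0 = (\<lambda>x. \<Phi>0 (x, 0) / \<alpha>)"
  define g0 where "g0 = (\<lambda>y. \<Phi>0 (0, y) / \<beta>)"
  have f0a: "\<alpha> * f0 x = \<Phi>0 (x, 0)" for x
    using base(2)[of x] by (cases "\<alpha> = 0") (auto simp: f0_def)
  have g0b: "\<beta> * g0 y = \<Phi>0 (0, y)" for y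
    using base(3)[of y] by (cases "\<beta> = 0") (auto simp: g0_def)
  have f0B: "f0 \<in> dual_ball norm"
  proof -
    have "linear f0" unfolding f0_def using lin_fst[OF base(1)] unfolding linear_iff by (auto simp: add_divide_distrib)
    moreover have "\<bar>f0 x\<bar> \<le> norm x" for x
      using base(2)[of x] st(2) by (cases "\<alpha> = 0") (auto simp: f0_def divide_le_eq mult.commute)
    ultimately show ?thesis by (simp add: dual_ball_def)
  qed
  have g0B: "g0 \<in> dual_ball norm"
  proof -
    have "linear g0" unfolding g0_def using lin_snd[OF base(1)] unfolding linear_iff by (auto simp: add_divide_distrib)
    moreover have "\<bar>g0 y\<bar> \<le> norm y" for y
      using base(3)[of y] st(3) by (cases "\<beta> = 0") (auto simp: g0_def divide_le_eq mult.commute)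
    ultimately show ?thesis by (simp add: dual_ball_def)
  qed
  define e' where "e' = e / (\<alpha> + \<beta> + 1)"
  have e': "e' > 0" using e st by (simp add: e'_def)
  have \<eta>2: "\<eta>/2 > 0" using \<eta> by simp
  obtain f1 f2 z1 where f: "f1 \<in> dual_ball norm" "f2 \<in> dual_ball norm"
    "\<forall>x\<in>fst ` F. \<bar>f1 x - f0 x\<bar> < e' \<and> \<bar>f2 x - f0 x\<bar> < e'" and z1: "norm z1 \<le> 1" "f1 z1 - f2 z1 > 2 - \<eta>/2"
    using d2p_elim[OF dX _ f0B _ e' \<eta>2, of "fst ` F"] F by auto
  obtain g1 g2 z2 where g: "g1 \<in> dual_ball norm" "g2 \<in> dual_ball norm"
    "\<forall>y\<in>snd ` F. \<bar>g1 y - g0 y\<bar> < e' \<and> \<bar>g2 y - g0 y\<bar> < e'" and z2: "norm z2 \<le> 1" "g1 z2 - g2 z2 > 2 - \<eta>/2"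
    using d2p_elim[OF dY _ g0B _ e' \<eta>2, of "snd ` F"] F by auto
  define \<Phi>1 where "\<Phi>1 = (\<lambda>w::'a\<times>'b. \<alpha> * f1 (fst w) + \<beta> * g1 (snd w))"
  define \<Phi>2 where "\<Phi>2 = (\<lambda>w::'a\<times>'b. \<alpha> * f2 (fst w) + \<beta> * g2 (snd w))"
  have inb: "(\<lambda>w::'a\<times>'b. \<alpha> * f (fst w) + \<beta> * g (snd w)) \<in> dual_ball N"
    if "f \<in> dual_ball norm" "g \<in> dual_ball norm" for f g
  proof -
    have "linear (\<lambda>w::'a\<times>'b. \<alpha> * f (fst w) + \<beta> * g (snd w))"
      using that by (intro lin_comb) (auto simp: dual_ball_def)
    moreover have "\<bar>\<alpha> * f (fst w) + \<beta> * g (snd w)\<bar> \<le> N w" for w :: "'a\<times>'b"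
    proof -
      have a: "\<bar>f (fst w)\<bar> \<le> norm (fst w)" "\<bar>g (snd w)\<bar> \<le> norm (snd w)" using that by (auto simp: dual_ball_def)
      have "\<bar>\<alpha> * f (fst w) + \<beta> * g (snd w)\<bar> \<le> \<alpha> * \<bar>f (fst w)\<bar> + \<beta> * \<bar>g (snd w)\<bar>"
        using st(2,3) by (simp add: abs_mult abs_triangle_ineq[THEN order_trans])
      also have "\<dots> \<le> \<alpha> * norm (fst w) + \<beta> * norm (snd w)"
        using a st(2,3) by (intro add_mono mult_left_mono) auto
      also have "\<dots> \<le> N w" using M[of "fst w" "snd w"] by simp
      finally show ?thesis .
    qed
    ultimately show ?thesis unfolding dual_ball_def by blast
  qed
  have split: "\<Phi>0 w = \<alpha> * f0 (fst w) + \<beta> * g0 (snd w)" for w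
    using lin_split[OF base(1), of w] by (simp only: f0a g0b)
  have near: "\<bar>\<alpha> * f (fst w) + \<beta> * g (snd w) - \<Phi>0 w\<bar> < e"
    if "w \<in> F" "\<bar>f (fst w) - f0 (fst w)\<bar> < e'" "\<bar>g (snd w) - g0 (snd w)\<bar> < e'" for f g w
  proof -
    have "\<bar>\<alpha> * f (fst w) + \<beta> * g (snd w) - \<Phi>0 w\<bar>
        = \<bar>\<alpha> * (f (fst w) - f0 (fst w)) + \<beta> * (g (snd w) - g0 (snd w))\<bar>"
      by (simp add: split algebra_simps)
    also have "\<dots> \<le> \<alpha> * \<bar>f (fst w) - f0 (fst w)\<bar> + \<beta> * \<bar>g (snd w) - g0 (snd w)\<bar>"
      using st(2,3) by (simp add: abs_mult abs_triangle_ineq[THEN order_trans])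
    also have "\<dots> \<le> \<alpha> * e' + \<beta> * e'"
      using that st(2,3) by (intro add_mono mult_left_mono) auto
    also have "\<dots> < e"
    proof -
      have "(\<alpha> + \<beta>) * e' < (\<alpha> + \<beta> + 1) * e'" using e' by simp
      also have "\<dots> = e" using st(2,3) by (simp add: e'_def)
      finally show ?thesis by (simp add: algebra_simps)
    qed
    finally show ?thesis .
  qed
  show ?thesis
  proof -
    have m1: "\<Phi>1 \<in> dual_ball N" unfolding \<Phi>1_def by (rule inb[OF f(1) g(1)])
    have m2: "\<Phi>2 \<in> dual_ball N" unfolding \<Phi>2_def by (rule inb[OF f(2) g(2)])
    have cl: "\<forall>w\<in>F. \<bar>\<Phi>1 w - \<Phi>0 w\<bar> < e \<and> \<bar>\<Phi>2 w - \<Phi>0 w\<bar> < e"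
      using f(3) g(3) by (auto simp: \<Phi>1_def \<Phi>2_def intro!: near)
    have "N (s *\<^sub>R z1, t *\<^sub>R z2) \<le> 1" by (rule E[OF z1(1) z2(1)])
    moreover have "\<Phi>1 (s *\<^sub>R z1, t *\<^sub>R z2) - \<Phi>2 (s *\<^sub>R z1, t *\<^sub>R z2) > 2 - \<eta>"
    proof -
      have lf: "linear f1" "linear f2" "linear g1" "linear g2" using f g by (auto simp: dual_ball_def)
      have "\<Phi>1 (s *\<^sub>R z1, t *\<^sub>R z2) - \<Phi>2 (s *\<^sub>R z1, t *\<^sub>R z2)
          = (\<alpha> * s) * (f1 z1 - f2 z1) + (\<beta> * t) * (g1 z2 - g2 z2)"
        by (simp add: \<Phi>1_def \<Phi>2_def linear_scale[OF lf(1)] linear_scale[OF lf(2)]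
            linear_scale[OF lf(3)] linear_scale[OF lf(4)] algebra_simps)
      moreover have "\<dots> \<ge> (\<alpha> * s) * (2 - \<eta>/2) + (\<beta> * t) * (2 - \<eta>/2)"
        using z1 z2 st by (intro add_mono mult_left_mono) auto
      moreover have "(\<alpha> * s) * (2 - \<eta>/2) + (\<beta> * t) * (2 - \<eta>/2) = (\<alpha> * s + \<beta> * t) * (2 - \<eta>/2)"
        by (simp add: distrib_right)
      ultimately show ?thesis using st(1) \<eta> by simp
    qed
    ultimately have "\<exists>z. N z \<le> 1 \<and> \<Phi>1 z - \<Phi>2 z > 2 - \<eta>" by blast
    then show ?thesis using m1 m2 cl by blast
  qed
qed




lemma young_pair:
  fixes P s t u v :: real
  assumes P: "P > 1" and st: "s \<ge> 0" "t \<ge> 0" "s powr P + t powr P = 1" and uv: "u \<ge> 0" "v \<ge> 0"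
  shows "s powr (P - 1) * u + t powr (P - 1) * v \<le> (u powr P + v powr P) powr (1/P)"
proof -
  define R where "R = (u powr P + v powr P) powr (1/P)"
  show ?thesis
  proof (cases "R = 0")
    case True
    then have "u powr P + v powr P = 0" by (simp add: R_def)
    then have "u = 0" "v = 0" using uv
      by (metis add_nonneg_eq_0_iff powr_eq_0_iff powr_ge_zero)+
    then show ?thesis using True R_def by simp
  next
    case False
    then have R0: "R > 0" by (simp add: R_def)
    define Q where "Q = P / (P - 1)"
    have Q1: "Q > 1" using P by (simp add: Q_def)
    have PQ: "1/P + 1/Q = 1" using P by (simp add: Q_def field_simps)
    have RP: "R powr P = u powr P + v powr P"
      using P by (simp add: R_def powr_powr)
    have sQ: "(s powr (P - 1)) powr Q = s powr P" using P by (simp add: powr_powr Q_def)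
    have tQ: "(t powr (P - 1)) powr Q = t powr P" using P by (simp add: powr_powr Q_def)
    have y1: "s powr (P - 1) * (u / R) \<le> (s powr (P - 1)) powr Q / Q + (u / R) powr P / P"
      using Youngs_inequality[OF Q1 P _ powr_ge_zero, of "u/R" "s"] PQ uv R0
      by (simp add: add.commute mult.commute)
    have y2: "t powr (P - 1) * (v / R) \<le> (t powr (P - 1)) powr Q / Q + (v / R) powr P / P"
      using Youngs_inequality[OF Q1 P _ powr_ge_zero, of "v/R" "t"] PQ uv R0
      by (simp add: add.commute mult.commute)
    have "s powr (P - 1) * (u / R) + t powr (P - 1) * (v / R)
        \<le> (s powr P + t powr P) / Q + ((u / R) powr P + (v / R) powr P) / P"
      using y1 y2 sQ tQ by (simp add: add_divide_distrib)
    also have "(u / R) powr P + (v / R) powr P = 1"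
    proof -
      have "u powr P + v powr P \<noteq> 0" using False by (auto simp: R_def)
      then show ?thesis using R0 RP by (simp add: powr_divide uv add_divide_distrib[symmetric])
    qed
    finally have "s powr (P - 1) * (u / R) + t powr (P - 1) * (v / R) \<le> 1"
      using st(3) PQ by simp
    then have "(s powr (P - 1) * u + t powr (P - 1) * v) / R \<le> 1" by (simp add: add_divide_distrib)
    then show ?thesis using R0 by (simp add: R_def divide_le_eq)
  qed
qed

lemma ball_bnd: "f \<in> dual_ball norm \<Longrightarrow> linear f \<and> (\<forall>x. \<bar>f x\<bar> \<le> 1 * norm x)"
  by (simp add: dual_ball_def)

lemma part_b_inf:
  assumes dX: "wstar_d2p (norm :: 'a::real_normed_vector \<Rightarrow> real)"
    and dY: "wstar_d2p (norm :: 'b::real_normed_vector \<Rightarrow> real)"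
  shows "wstar_d2p (psum_norm \<infinity> :: 'a \<times> 'b \<Rightarrow> real)"
proof (rule d2p_intro)
  show "psum_norm \<infinity> (0::'a\<times>'b) = 0" by (rule psum_0) simp
  fix \<Phi>0 :: "'a \<times> 'b \<Rightarrow> real" and F :: "('a\<times>'b) set" and e \<eta> :: real
  assume \<Phi>0: "\<Phi>0 \<in> dual_ball (psum_norm \<infinity>)" and F: "finite F" and e: "e > 0" and \<eta>: "\<eta> > 0"
  have lin0: "linear \<Phi>0" and bd0: "\<And>w. \<bar>\<Phi>0 w\<bar> \<le> psum_norm \<infinity> w" using \<Phi>0 by (auto simp: dual_ball_def)
  define f0 where "f0 = (\<lambda>x. \<Phi>0 (x, 0))"
  define g0 where "g0 = (\<lambda>y. \<Phi>0 (0, y))"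
  have f0b: "f0 \<in> dual_ball norm" unfolding f0_def by (rule ball_fst[OF _ \<Phi>0]) simp
  have g0b: "g0 \<in> dual_ball norm" unfolding g0_def by (rule ball_snd[OF _ \<Phi>0]) simp
  have lf: "linear f0" "\<And>x. \<bar>f0 x\<bar> \<le> 1 * norm x" using ball_bnd[OF f0b] by auto
  have lg: "linear g0" "\<And>y. \<bar>g0 y\<bar> \<le> 1 * norm y" using ball_bnd[OF g0b] by auto
  define a where "a = dual_norm norm f0"
  define b where "b = dual_norm norm g0"
  have a0: "a \<ge> 0" unfolding a_def by (rule dnn_nonneg[OF lf])
  have b0: "b \<ge> 0" unfolding b_def by (rule dnn_nonneg[OF lg])
  have ab: "a + b \<le> 1"
  proof (rule ccontr)
    assume "\<not> a + b \<le> 1"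
    define \<delta> where "\<delta> = (a + b - 1) / 4"
    have \<delta>: "\<delta> > 0" using \<open>\<not> a + b \<le> 1\<close> by (simp add: \<delta>_def)
    obtain x where x: "norm x \<le> 1" "f0 x > a - \<delta>" using dnn_near[OF lf \<delta>] a_def by auto
    obtain y where y: "norm y \<le> 1" "g0 y > b - \<delta>" using dnn_near[OF lg \<delta>] b_def by auto
    have "\<Phi>0 (x, y) = f0 x + g0 y" using lin_split[OF lin0, of "(x,y)"] by (simp add: f0_def g0_def)
    moreover have "\<Phi>0 (x, y) \<le> 1" using bd0[of "(x,y)"] x y by (simp add: psum_inf)
    ultimately show False using x y \<open>\<not> a + b \<le> 1\<close> unfolding \<delta>_def by argo
  qed
  define \<alpha> where "\<alpha> = a + (1 - a - b) / 2"
  define \<beta> where "\<beta> = b + (1 - a - b) / 2"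
  show "\<exists>\<Phi>1\<in>dual_ball (psum_norm \<infinity>). \<exists>\<Phi>2\<in>dual_ball (psum_norm \<infinity>).
          (\<forall>x\<in>F. \<bar>\<Phi>1 x - \<Phi>0 x\<bar> < e \<and> \<bar>\<Phi>2 x - \<Phi>0 x\<bar> < e) \<and> (\<exists>z. psum_norm \<infinity> z \<le> 1 \<and> \<Phi>1 z - \<Phi>2 z > 2 - \<eta>)"
  proof (rule b_core[OF dX dY _ _ _ _ _ _ _ lin0 _ _ F e \<eta>, where \<alpha>=\<alpha> and \<beta>=\<beta> and s=1 and t=1])
    fix x :: 'a and y :: 'b
    have "\<alpha> * norm x + \<beta> * norm y \<le> \<alpha> * max (norm x) (norm y) + \<beta> * max (norm x) (norm y)"
      using ab a0 b0 by (intro add_mono mult_left_mono) (auto simp: \<alpha>_def \<beta>_def)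
    also have "\<dots> = max (norm x) (norm y)" by (simp add: \<alpha>_def \<beta>_def algebra_simps)
    finally show "\<alpha> * norm x + \<beta> * norm y \<le> psum_norm \<infinity> (x, y)" by (simp add: psum_inf)
  next
    fix x :: 'a and y :: 'b assume "norm x \<le> 1" "norm y \<le> 1"
    then show "psum_norm \<infinity> (1 *\<^sub>R x, 1 *\<^sub>R y) \<le> 1" by (simp add: psum_inf)
  next
    show "\<alpha> * 1 + \<beta> * 1 = 1" by (simp add: \<alpha>_def \<beta>_def)
    show "0 \<le> \<alpha>" "0 \<le> \<beta>" using ab a0 b0 by (auto simp: \<alpha>_def \<beta>_def)
    show "(0::real) \<le> 1" "(0::real) \<le> 1" by simp_all
  next
    fix x :: 'a
    have "\<bar>f0 x\<bar> \<le> a * norm x" unfolding a_def by (rule dnn_le[OF lf])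
    also have "\<dots> \<le> \<alpha> * norm x" using ab by (intro mult_right_mono) (auto simp: \<alpha>_def)
    finally show "\<bar>\<Phi>0 (x, 0)\<bar> \<le> \<alpha> * norm x" by (simp add: f0_def)
  next
    fix y :: 'b
    have "\<bar>g0 y\<bar> \<le> b * norm y" unfolding b_def by (rule dnn_le[OF lg])
    also have "\<dots> \<le> \<beta> * norm y" using ab by (intro mult_right_mono) (auto simp: \<beta>_def)
    finally show "\<bar>\<Phi>0 (0, y)\<bar> \<le> \<beta> * norm y" by (simp add: g0_def)
  qed
qed

lemma powr_aux1: "(a::real) \<ge> 0 \<Longrightarrow> P > 1 \<Longrightarrow> (a powr (1/(P-1))) powr (P - 1) = a"
  by (simp add: powr_powr)

lemma powr_aux2: "(A::real) \<ge> 0 \<Longrightarrow> A powr (P - 1) * A = A powr P"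
proof -
  assume "A \<ge> 0"
  have "A powr P = A powr ((P - 1) + 1)" by simp
  also have "\<dots> = A powr (P - 1) * A powr 1" by (rule powr_add)
  also have "\<dots> = A powr (P - 1) * A" using \<open>A \<ge> 0\<close> by simp
  finally show ?thesis by simp
qed

lemma powr_aux3: "(x::real) \<ge> 0 \<Longrightarrow> P > 0 \<Longrightarrow> (x powr (1/P)) powr P = x"
  by (simp add: powr_powr)

lemma powr_aux4: "(x::real) \<ge> 0 \<Longrightarrow> P > 0 \<Longrightarrow> (x powr P) powr (1/P) = x"
  by (simp add: powr_powr)

lemma part_b_fin:
  assumes dX: "wstar_d2p (norm :: 'a::real_normed_vector \<Rightarrow> real)"
    and dY: "wstar_d2p (norm :: 'b::real_normed_vector \<Rightarrow> real)"
    and p: "1 < p" "p \<noteq> \<infinity>"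
  shows "wstar_d2p (psum_norm p :: 'a \<times> 'b \<Rightarrow> real)"
proof (rule d2p_intro)
  show "psum_norm p (0::'a\<times>'b) = 0" by (rule psum_0) (use p in simp)
  define P where "P = real_of_ereal p"
  have P1: "P > 1" using p unfolding P_def by (cases p) auto
  have N: "psum_norm p (x, y) = (norm x powr P + norm y powr P) powr (1/P)" for x :: 'a and y :: 'b
    using psum_fin[OF p(2), of "(x,y)"] by (simp add: P_def)
  fix \<Phi>0 :: "'a \<times> 'b \<Rightarrow> real" and F :: "('a\<times>'b) set" and e \<eta> :: real
  assume \<Phi>0: "\<Phi>0 \<in> dual_ball (psum_norm p)" and F: "finite F" and e: "e > 0" and \<eta>: "\<eta> > 0"
  have lin0: "linear \<Phi>0" and bd0: "\<And>w. \<bar>\<Phi>0 w\<bar> \<le> psum_norm p w" using \<Phi>0 by (auto simp: dual_ball_def)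
  define f0 where "f0 = (\<lambda>x. \<Phi>0 (x, 0))"
  define g0 where "g0 = (\<lambda>y. \<Phi>0 (0, y))"
  have f0b: "f0 \<in> dual_ball norm" unfolding f0_def by (rule ball_fst[OF _ \<Phi>0]) (use p in simp)
  have g0b: "g0 \<in> dual_ball norm" unfolding g0_def by (rule ball_snd[OF _ \<Phi>0]) (use p in simp)
  have lf: "linear f0" "\<And>x. \<bar>f0 x\<bar> \<le> 1 * norm x" using ball_bnd[OF f0b] by auto
  have lg: "linear g0" "\<And>y. \<bar>g0 y\<bar> \<le> 1 * norm y" using ball_bnd[OF g0b] by auto
  define a where "a = dual_norm norm f0"
  define b where "b = dual_norm norm g0"
  have a0: "a \<ge> 0" unfolding a_def by (rule dnn_nonneg[OF lf])
  have b0: "b \<ge> 0" unfolding b_def by (rule dnn_nonneg[OF lg])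
  define A where "A = a powr (1/(P-1))"
  define B where "B = b powr (1/(P-1))"
  have A0: "A \<ge> 0" "B \<ge> 0" by (simp_all add: A_def B_def)
  have Aa: "A powr (P - 1) = a" "B powr (P - 1) = b" using a0 b0 P1 by (simp_all add: A_def B_def powr_aux1)
  have AP: "A * a = A powr P" "B * b = B powr P"
    using powr_aux2[OF A0(1), of P] powr_aux2[OF A0(2), of P] Aa by (simp_all add: mult.commute)
  define S where "S = A powr P + B powr P"
  have S1: "S \<le> 1"
  proof (rule ccontr)
    assume "\<not> S \<le> 1"
    then have "S powr (1/P) < S powr 1" using P1 by (intro powr_less_mono) auto
    then have lt: "S powr (1/P) < S" using \<open>\<not> S \<le> 1\<close> by simp
    define \<delta> where "\<delta> = (S - S powr (1/P)) / (2 * (A + B + 1))"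
    have \<delta>: "\<delta> > 0" using lt A0 by (simp add: \<delta>_def)
    obtain x where x: "norm x \<le> 1" "f0 x > a - \<delta>" using dnn_near[OF lf \<delta>] a_def by auto
    obtain y where y: "norm y \<le> 1" "g0 y > b - \<delta>" using dnn_near[OF lg \<delta>] b_def by auto
    have "\<Phi>0 (A *\<^sub>R x, B *\<^sub>R y) = A * f0 x + B * g0 y"
      using lin_split[OF lin0, of "(A *\<^sub>R x, B *\<^sub>R y)"] linear_scale[OF lf(1)] linear_scale[OF lg(1)]
      by (simp add: f0_def g0_def)
    also have "\<dots> \<ge> A * (a - \<delta>) + B * (b - \<delta>)"
      using x y A0 by (intro add_mono mult_left_mono) auto
    finally have ge: "\<Phi>0 (A *\<^sub>R x, B *\<^sub>R y) \<ge> S - \<delta> * (A + B)"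
      using AP by (simp add: S_def algebra_simps)
    have "\<delta> * (A + B) < S - S powr (1/P)"
    proof -
      have "\<delta> * (A + B) \<le> \<delta> * (2 * (A + B + 1)) / 2" using \<delta> A0 by (simp add: field_simps)
      also have "\<dots> = (S - S powr (1/P)) / 2" using A0 by (simp add: \<delta>_def)
      also have "\<dots> < S - S powr (1/P)" using lt by simp
      finally show ?thesis .
    qed
    with ge have gt: "\<Phi>0 (A *\<^sub>R x, B *\<^sub>R y) > S powr (1/P)" by simp
    have "\<Phi>0 (A *\<^sub>R x, B *\<^sub>R y) \<le> psum_norm p (A *\<^sub>R x, B *\<^sub>R y)" using bd0 abs_ge_self order_trans by blast
    also have "\<dots> = ((A * norm x) powr P + (B * norm y) powr P) powr (1/P)" using A0 by (simp add: N)
    also have "\<dots> \<le> S powr (1/P)"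
    proof -
      have "(A * norm x) powr P \<le> A powr P" using A0 x P1 by (intro powr_mono2) (auto simp: mult_left_le)
      moreover have "(B * norm y) powr P \<le> B powr P" using A0 y P1 by (intro powr_mono2) (auto simp: mult_left_le)
      ultimately show ?thesis using P1 unfolding S_def by (intro powr_mono2) auto
    qed
    finally show False using gt by simp
  qed
  define c where "c = (1 - S) / 2"
  have c0: "c \<ge> 0" using S1 by (simp add: c_def)
  define s where "s = (A powr P + c) powr (1/P)"
  define t where "t = (B powr P + c) powr (1/P)"
  have s0: "s \<ge> 0" "t \<ge> 0" by (simp_all add: s_def t_def)
  have sP: "s powr P = A powr P + c" "t powr P = B powr P + c"
    using P1 c0 by (simp_all add: s_def t_def powr_aux3)
  have st1: "s powr P + t powr P = 1" using sP by (simp add: S_def c_def)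
  have As: "A \<le> s" "B \<le> t"
  proof -
    have "A = (A powr P) powr (1/P)" using A0 P1 by (simp add: powr_aux4)
    also have "\<dots> \<le> s" unfolding s_def using c0 P1 by (intro powr_mono2) auto
    finally show "A \<le> s" .
    have "B = (B powr P) powr (1/P)" using A0 P1 by (simp add: powr_aux4)
    also have "\<dots> \<le> t" unfolding t_def using c0 P1 by (intro powr_mono2) auto
    finally show "B \<le> t" .
  qed
  define \<alpha> where "\<alpha> = s powr (P - 1)"
  define \<beta> where "\<beta> = t powr (P - 1)"
  have a\<alpha>: "a \<le> \<alpha>" "b \<le> \<beta>"
    using Aa As A0 P1 unfolding \<alpha>_def \<beta>_def by (metis diff_ge_0_iff_ge less_imp_le powr_mono2)+
  show "\<exists>\<Phi>1\<in>dual_ball (psum_norm p). \<exists>\<Phi>2\<in>dual_ball (psum_norm p).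
          (\<forall>x\<in>F. \<bar>\<Phi>1 x - \<Phi>0 x\<bar> < e \<and> \<bar>\<Phi>2 x - \<Phi>0 x\<bar> < e) \<and> (\<exists>z. psum_norm p z \<le> 1 \<and> \<Phi>1 z - \<Phi>2 z > 2 - \<eta>)"
  proof (rule b_core[OF dX dY _ _ _ _ _ _ _ lin0 _ _ F e \<eta>, where \<alpha>=\<alpha> and \<beta>=\<beta> and s=s and t=t])
    fix x :: 'a and y :: 'b
    show "\<alpha> * norm x + \<beta> * norm y \<le> psum_norm p (x, y)"
      unfolding N \<alpha>_def \<beta>_def by (rule young_pair[OF P1 s0 st1]) auto
  next
    fix x :: 'a and y :: 'b assume xy: "norm x \<le> 1" "norm y \<le> 1"
    have "(s * norm x) powr P + (t * norm y) powr P \<le> s powr P + t powr P"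
      using xy s0 P1 by (intro add_mono powr_mono2) (auto simp: mult_left_le)
    then have "(s * norm x) powr P + (t * norm y) powr P \<le> 1" using st1 by simp
    then show "psum_norm p (s *\<^sub>R x, t *\<^sub>R y) \<le> 1"
      using s0 P1 by (simp add: N powr_le1)
  next
    show "\<alpha> * s + \<beta> * t = 1" using st1 powr_aux2[OF s0(1), of P] powr_aux2[OF s0(2), of P]
      by (simp add: \<alpha>_def \<beta>_def)
    show "0 \<le> \<alpha>" "0 \<le> \<beta>" by (simp_all add: \<alpha>_def \<beta>_def)
    show "0 \<le> s" "0 \<le> t" using s0 by auto
  next
    fix x :: 'a
    have "\<bar>f0 x\<bar> \<le> a * norm x" unfolding a_def by (rule dnn_le[OF lf])
    also have "\<dots> \<le> \<alpha> * norm x" using a\<alpha> by (intro mult_right_mono) auto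
    finally show "\<bar>\<Phi>0 (x, 0)\<bar> \<le> \<alpha> * norm x" by (simp add: f0_def)
  next
    fix y :: 'b
    have "\<bar>g0 y\<bar> \<le> b * norm y" unfolding b_def by (rule dnn_le[OF lg])
    also have "\<dots> \<le> \<beta> * norm y" using a\<alpha> by (intro mult_right_mono) auto
    finally show "\<bar>\<Phi>0 (0, y)\<bar> \<le> \<beta> * norm y" by (simp add: g0_def)
  qed
qed




definition hb_good :: "'a::real_normed_vector \<Rightarrow> ('a \<times> real) set \<Rightarrow> bool" where
  "hb_good x0 G \<longleftrightarrow> (\<forall>x a b. (x,a) \<in> G \<longrightarrow> (x,b) \<in> G \<longrightarrow> a = b)
     \<and> (\<forall>x a y b. (x,a) \<in> G \<longrightarrow> (y,b) \<in> G \<longrightarrow> (x + y, a + b) \<in> G)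
     \<and> (\<forall>x a c. (x,a) \<in> G \<longrightarrow> (c *\<^sub>R x, c * a) \<in> G)
     \<and> (\<forall>x a. (x,a) \<in> G \<longrightarrow> a \<le> norm x)
     \<and> (x0, norm x0) \<in> G"

lemma hb_init:
  fixes x0 :: "'a::real_normed_vector"
  assumes "x0 \<noteq> 0"
  shows "hb_good x0 {(c *\<^sub>R x0, c * norm x0) | c. True}"
  unfolding hb_good_def
proof (intro conjI allI impI)
  fix x a b assume "(x, a) \<in> {(c *\<^sub>R x0, c * norm x0) |c. True}" "(x, b) \<in> {(c *\<^sub>R x0, c * norm x0) |c. True}"
  then obtain c c' where "x = c *\<^sub>R x0" "a = c * norm x0" "x = c' *\<^sub>R x0" "b = c' * norm x0" by blast
  then show "a = b" using assms by (metis scaleR_cancel_right)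
next
  fix x a y b assume "(x, a) \<in> {(c *\<^sub>R x0, c * norm x0) |c. True}" "(y, b) \<in> {(c *\<^sub>R x0, c * norm x0) |c. True}"
  then obtain c c' where "x = c *\<^sub>R x0" "a = c * norm x0" "y = c' *\<^sub>R x0" "b = c' * norm x0" by blast
  then have "(x + y, a + b) = ((c + c') *\<^sub>R x0, (c + c') * norm x0)" by (simp add: scaleR_add_left distrib_right)
  then show "(x + y, a + b) \<in> {(c *\<^sub>R x0, c * norm x0) |c. True}" by blast
next
  fix x a k assume "(x, a) \<in> {(c *\<^sub>R x0, c * norm x0) |c. True}"
  then obtain c where "x = c *\<^sub>R x0" "a = c * norm x0" by auto
  then have "(k *\<^sub>R x, k * a) = ((k * c) *\<^sub>R x0, (k * c) * norm x0)" by simp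
  then show "(k *\<^sub>R x, k * a) \<in> {(c *\<^sub>R x0, c * norm x0) |c. True}" by blast
next
  fix x a assume "(x, a) \<in> {(c *\<^sub>R x0, c * norm x0) |c. True}"
  then obtain c where "x = c *\<^sub>R x0" "a = c * norm x0" by auto
  then show "a \<le> norm x" by (simp add: mult_right_mono)
next
  have "(x0, norm x0) = (1 *\<^sub>R x0, 1 * norm x0)" by simp
  then show "(x0, norm x0) \<in> {(c *\<^sub>R x0, c * norm x0) |c. True}" by blast
qed

lemma hb_chain:
  assumes "C \<noteq> {}" "subset.chain {G. hb_good x0 G} C"
  shows "hb_good x0 (\<Union>C)"
proof -
  have CA: "\<And>G. G \<in> C \<Longrightarrow> hb_good x0 G" and ch: "\<And>G H. G \<in> C \<Longrightarrow> H \<in> C \<Longrightarrow> G \<subseteq> H \<or> H \<subseteq> G"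
    using assms(2) by (auto simp: subset_chain_def)
  have two: "\<exists>G\<in>C. p \<in> G \<and> q \<in> G" if pq: "p \<in> \<Union>C" "q \<in> \<Union>C" for p q
  proof -
    obtain G H where "G \<in> C" "H \<in> C" "p \<in> G" "q \<in> H" using pq by blast
    then show ?thesis using ch[of G H] by blast
  qed
  obtain G0 where "G0 \<in> C" using assms(1) by auto
  show ?thesis unfolding hb_good_def
  proof (intro conjI allI impI)
    fix x a b assume "(x, a) \<in> \<Union>C" "(x, b) \<in> \<Union>C"
    then obtain G where "G \<in> C" "(x,a) \<in> G" "(x,b) \<in> G" using two by blast
    then show "a = b" using CA unfolding hb_good_def by blast
  next
    fix x a y b assume "(x, a) \<in> \<Union>C" "(y, b) \<in> \<Union>C"
    then obtain G where "G \<in> C" "(x,a) \<in> G" "(y,b) \<in> G" using two by blast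
    then have "(x + y, a + b) \<in> G" using CA unfolding hb_good_def by blast
    then show "(x + y, a + b) \<in> \<Union>C" using \<open>G \<in> C\<close> by blast
  next
    fix x a c assume "(x, a) \<in> \<Union>C"
    then obtain G where "G \<in> C" "(x,a) \<in> G" by blast
    then have "(c *\<^sub>R x, c * a) \<in> G" using CA unfolding hb_good_def by blast
    then show "(c *\<^sub>R x, c * a) \<in> \<Union>C" using \<open>G \<in> C\<close> by blast
  next
    fix x a assume "(x, a) \<in> \<Union>C"
    then obtain G where "G \<in> C" "(x,a) \<in> G" by blast
    then show "a \<le> norm x" using CA unfolding hb_good_def by blast
  next
    show "(x0, norm x0) \<in> \<Union>C" using \<open>G0 \<in> C\<close> CA unfolding hb_good_def by blast
  qed
qed

lemma hb_extend:
  fixes x0 :: "'a::real_normed_vector"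
  assumes G: "hb_good x0 G" and z: "\<not> (\<exists>a. (z, a) \<in> G)"
  shows "\<exists>G'. hb_good x0 G' \<and> G \<subseteq> G' \<and> G' \<noteq> G"
proof -
  have fnc: "\<And>x a b. (x,a) \<in> G \<Longrightarrow> (x,b) \<in> G \<Longrightarrow> a = b"
    and add: "\<And>x a y b. (x,a) \<in> G \<Longrightarrow> (y,b) \<in> G \<Longrightarrow> (x + y, a + b) \<in> G"
    and scl: "\<And>x a c. (x,a) \<in> G \<Longrightarrow> (c *\<^sub>R x, c * a) \<in> G"
    and bnd: "\<And>x a. (x,a) \<in> G \<Longrightarrow> a \<le> norm x"
    and x0G: "(x0, norm x0) \<in> G"
    using G unfolding hb_good_def by blast+
  define D where "D = {x. \<exists>a. (x, a) \<in> G}"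
  define h where "h = (\<lambda>x. THE a. (x, a) \<in> G)"
  have hG: "(x, h x) \<in> G" if xD: "x \<in> D" for x
  proof -
    obtain a where a: "(x,a) \<in> G" using xD unfolding D_def by blast
    have "h x = a" unfolding h_def using a fnc by blast
    then show ?thesis using a by simp
  qed
  have hval: "h x = a" if "(x,a) \<in> G" for x a
    unfolding h_def using that fnc by blast
  have D0: "0 \<in> D" using scl[OF x0G, of 0] by (auto simp: D_def)
  have Dadd: "x + y \<in> D" if "x \<in> D" "y \<in> D" for x y using add[OF hG[OF that(1)] hG[OF that(2)]] by (auto simp: D_def)
  have Dscl: "c *\<^sub>R x \<in> D" if "x \<in> D" for x c using scl[OF hG[OF that]] by (auto simp: D_def)
  have hadd: "h (x + y) = h x + h y" if "x \<in> D" "y \<in> D" for x y using hval[OF add[OF hG[OF that(1)] hG[OF that(2)]]] .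
  have hscl: "h (c *\<^sub>R x) = c * h x" if "x \<in> D" for x c using hval[OF scl[OF hG[OF that]]] .
  have hbnd: "h x \<le> norm x" if "x \<in> D" for x using bnd[OF hG[OF that]] .
  have h0: "h 0 = 0" using hscl[OF D0, of 0] by simp
  have zD: "z \<notin> D" using z by (auto simp: D_def)
  define L where "L = {h m - norm (m - z) | m. m \<in> D}"
  define \<gamma> where "\<gamma> = Sup L"
  have key: "h m - norm (m - z) \<le> norm (m' + z) - h m'" if "m \<in> D" "m' \<in> D" for m m'
  proof -
    have "h m + h m' = h (m + m')" using hadd[OF that] by simp
    also have "\<dots> \<le> norm (m + m')" using hbnd[OF Dadd[OF that]] .
    also have "\<dots> \<le> norm (m - z) + norm (m' + z)"
      using norm_triangle_ineq[of "m - z" "m' + z"] by simp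
    finally show ?thesis by simp
  qed
  have Lne: "L \<noteq> {}" using D0 by (auto simp: L_def)
  have \<gamma>ge: "h m - norm (m - z) \<le> \<gamma>" if "m \<in> D" for m
    unfolding \<gamma>_def
  proof (rule cSup_upper)
    show "h m - norm (m - z) \<in> L" using that by (auto simp: L_def)
    show "bdd_above L" unfolding L_def using key[OF _ D0] by (auto intro!: bdd_aboveI)
  qed
  have \<gamma>le: "\<gamma> \<le> norm (m' + z) - h m'" if "m' \<in> D" for m'
    unfolding \<gamma>_def by (rule cSup_least[OF Lne]) (use key[OF _ that] in \<open>auto simp: L_def\<close>)
  define G' where "G' = {(m + c *\<^sub>R z, h m + c * \<gamma>) | m c. m \<in> D}"
  have uniq: "m = m' \<and> c = c'" if "m \<in> D" "m' \<in> D" "m + c *\<^sub>R z = m' + c' *\<^sub>R z" for m m' c c'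
  proof (cases "c = c'")
    case True then show ?thesis using that by simp
  next
    case False
    have eq: "(c - c') *\<^sub>R z = m' - m" using that(3) by (simp add: algebra_simps)
    have "z = (1 / (c - c')) *\<^sub>R ((c - c') *\<^sub>R z)" using False by simp
    also have "\<dots> = (1 / (c - c')) *\<^sub>R (m' + (-1) *\<^sub>R m)" using eq by simp
    finally have "z = (1 / (c - c')) *\<^sub>R (m' + (-1) *\<^sub>R m)" .
    moreover have "(1 / (c - c')) *\<^sub>R (m' + (-1) *\<^sub>R m) \<in> D" using that(1,2) by (intro Dscl Dadd)
    ultimately show ?thesis using zD by simp
  qed
  have "hb_good x0 G'"
    unfolding hb_good_def
  proof (intro conjI allI impI)
    fix x a b assume "(x, a) \<in> G'" "(x, b) \<in> G'"
    then obtain m c m' c' where "m \<in> D" "m' \<in> D" "x = m + c *\<^sub>R z" "a = h m + c * \<gamma>" "x = m' + c' *\<^sub>R z" "b = h m' + c' * \<gamma>"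
      unfolding G'_def by blast
    then show "a = b" using uniq by metis
  next
    fix x a y b assume "(x, a) \<in> G'" "(y, b) \<in> G'"
    then obtain m c m' c' where m: "m \<in> D" "m' \<in> D" "x = m + c *\<^sub>R z" "a = h m + c * \<gamma>" "y = m' + c' *\<^sub>R z" "b = h m' + c' * \<gamma>"
      unfolding G'_def by blast
    then have "(x + y, a + b) = ((m + m') + (c + c') *\<^sub>R z, h (m + m') + (c + c') * \<gamma>)"
      using hadd[OF m(1,2)] by (simp add: algebra_simps)
    then show "(x + y, a + b) \<in> G'" unfolding G'_def using Dadd[OF m(1,2)] by blast
  next
    fix x a k assume "(x, a) \<in> G'"
    then obtain m c where m: "m \<in> D" "x = m + c *\<^sub>R z" "a = h m + c * \<gamma>" unfolding G'_def by blast
    then have "(k *\<^sub>R x, k * a) = (k *\<^sub>R m + (k * c) *\<^sub>R z, h (k *\<^sub>R m) + (k * c) * \<gamma>)"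
      using hscl[OF m(1)] by (simp add: algebra_simps scaleR_add_right)
    then show "(k *\<^sub>R x, k * a) \<in> G'" unfolding G'_def using Dscl[OF m(1)] by blast
  next
    fix x a assume "(x, a) \<in> G'"
    then obtain m c where m: "m \<in> D" "x = m + c *\<^sub>R z" "a = h m + c * \<gamma>" unfolding G'_def by blast
    show "a \<le> norm x"
    proof (cases c "0::real" rule: linorder_cases)
      case equal then show ?thesis using m hbnd by simp
    next
      case greater
      have mc: "(1/c) *\<^sub>R m \<in> D" using Dscl[OF m(1)] .
      have "\<gamma> \<le> norm ((1/c) *\<^sub>R m + z) - h ((1/c) *\<^sub>R m)" using \<gamma>le[OF mc] .
      then have "c * (h ((1/c) *\<^sub>R m) + \<gamma>) \<le> c * norm ((1/c) *\<^sub>R m + z)" using greater by (simp add: mult_left_mono)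
      moreover have "c * h ((1/c) *\<^sub>R m) = h m" using hscl[OF m(1)] greater by simp
      moreover have "c * norm ((1/c) *\<^sub>R m + z) = norm (m + c *\<^sub>R z)"
      proof -
        have "c * norm ((1/c) *\<^sub>R m + z) = norm (c *\<^sub>R ((1/c) *\<^sub>R m + z))" using greater by simp
        also have "c *\<^sub>R ((1/c) *\<^sub>R m + z) = m + c *\<^sub>R z" using greater by (simp add: scaleR_add_right)
        finally show ?thesis .
      qed
      ultimately show ?thesis using m by (simp add: distrib_left)
    next
      case less
      define d where "d = - c"
      have d: "d > 0" using less by (simp add: d_def)
      have mc: "(1/d) *\<^sub>R m \<in> D" using Dscl[OF m(1)] .
      have "h ((1/d) *\<^sub>R m) - norm ((1/d) *\<^sub>R m - z) \<le> \<gamma>" using \<gamma>ge[OF mc] .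
      then have "d * (h ((1/d) *\<^sub>R m) - \<gamma>) \<le> d * norm ((1/d) *\<^sub>R m - z)" using d by (simp add: mult_left_mono)
      moreover have "d * h ((1/d) *\<^sub>R m) = h m" using hscl[OF m(1)] d by simp
      moreover have "d * norm ((1/d) *\<^sub>R m - z) = norm (m + c *\<^sub>R z)"
      proof -
        have "d * norm ((1/d) *\<^sub>R m - z) = norm (d *\<^sub>R ((1/d) *\<^sub>R m - z))" using d by simp
        also have "d *\<^sub>R ((1/d) *\<^sub>R m - z) = m + c *\<^sub>R z" using d by (simp add: scaleR_diff_right d_def)
        finally show ?thesis .
      qed
      ultimately show ?thesis using m by (simp add: right_diff_distrib d_def)
    qed
  next
    have "(x0, norm x0) = (x0 + 0 *\<^sub>R z, h x0 + 0 * \<gamma>)" using hval[OF x0G] by simp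
    moreover have "x0 \<in> D" using x0G by (auto simp: D_def)
    ultimately show "(x0, norm x0) \<in> G'" unfolding G'_def by blast
  qed
  moreover have "G \<subseteq> G'"
  proof
    fix p assume p: "p \<in> G"
    obtain x a where xa: "p = (x, a)" by (cases p)
    have "x \<in> D" using p xa by (auto simp: D_def)
    moreover have "(x, a) = (x + 0 *\<^sub>R z, h x + 0 * \<gamma>)" using hval p xa by simp
    ultimately show "p \<in> G'" unfolding G'_def using xa by blast
  qed
  moreover have "G' \<noteq> G"
  proof -
    have "(z, \<gamma>) = (0 + 1 *\<^sub>R z, h 0 + 1 * \<gamma>)" using h0 by simp
    then have "(z, \<gamma>) \<in> G'" unfolding G'_def using D0 by blast
    then show ?thesis using z by blast
  qed
  ultimately show ?thesis by blast
qed

lemma hahn_banach_norm: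
  fixes x0 :: "'a::real_normed_vector"
  assumes "x0 \<noteq> 0"
  shows "\<exists>u. linear u \<and> (\<forall>x. \<bar>u x\<bar> \<le> norm x) \<and> u x0 = norm x0"
proof -
  have "\<exists>M\<in>{G. hb_good x0 G}. \<forall>X\<in>{G. hb_good x0 G}. M \<subseteq> X \<longrightarrow> X = M"
  proof (rule subset_Zorn_nonempty)
    show "{G. hb_good x0 G} \<noteq> {}" using hb_init[OF assms] by blast
    fix C assume "C \<noteq> {}" "subset.chain {G. hb_good x0 G} C"
    then show "\<Union>C \<in> {G. hb_good x0 G}" using hb_chain by blast
  qed
  then obtain G where G: "hb_good x0 G" and max: "\<And>X. hb_good x0 X \<Longrightarrow> G \<subseteq> X \<Longrightarrow> X = G" by blast
  have tot: "\<exists>a. (z, a) \<in> G" for z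
  proof (rule ccontr)
    assume "\<not> (\<exists>a. (z, a) \<in> G)"
    from hb_extend[OF G this] max show False by blast
  qed
  have fnc: "\<And>x a b. (x,a) \<in> G \<Longrightarrow> (x,b) \<in> G \<Longrightarrow> a = b"
    and add: "\<And>x a y b. (x,a) \<in> G \<Longrightarrow> (y,b) \<in> G \<Longrightarrow> (x + y, a + b) \<in> G"
    and scl: "\<And>x a c. (x,a) \<in> G \<Longrightarrow> (c *\<^sub>R x, c * a) \<in> G"
    and bnd: "\<And>x a. (x,a) \<in> G \<Longrightarrow> a \<le> norm x"
    and x0G: "(x0, norm x0) \<in> G"
    using G unfolding hb_good_def by blast+
  define u where "u = (\<lambda>x. THE a. (x, a) \<in> G)"
  have uG: "(x, u x) \<in> G" for x
  proof -
    obtain a where a: "(x,a) \<in> G" using tot by blast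
    have "u x = a" unfolding u_def using a fnc by blast
    then show ?thesis using a by simp
  qed
  have uval: "u x = a" if "(x,a) \<in> G" for x a
    unfolding u_def using that fnc by blast
  have "linear u"
  proof (rule linearI)
    show "u (x + y) = u x + u y" for x y using uval[OF add[OF uG uG]] .
    show "u (c *\<^sub>R x) = c *\<^sub>R u x" for c x using uval[OF scl[OF uG]] by simp
  qed
  moreover have "\<bar>u x\<bar> \<le> norm x" for x
  proof -
    have "u x \<le> norm x" using bnd[OF uG] .
    moreover have "u (-x) = - u x" using uval[OF scl[OF uG[of x], of "-1"]] by simp
    moreover have "u (-x) \<le> norm (-x)" using bnd[OF uG] .
    ultimately show ?thesis by simp
  qed
  moreover have "u x0 = norm x0" using uval[OF x0G] .
  ultimately show ?thesis by blast
qed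




definition rexp :: "ereal \<Rightarrow> real" where
  "rexp p = (if p = \<infinity> then 2 else real_of_ereal p)"

lemma rexp_gt1: "1 < p \<Longrightarrow> 1 < rexp p"
  by (cases p) (auto simp: rexp_def)

lemma psum_small:
  fixes x :: "'a::real_normed_vector" and y :: "'b::real_normed_vector"
  assumes p: "1 < p" and xy: "norm x \<le> 1" "norm y \<le> t" and t: "0 < t" "t \<le> 1"
  shows "psum_norm p (x, y) \<le> 1 + t powr rexp p"
proof (cases "p = \<infinity>")
  case True
  have "0 \<le> t powr 2" by simp
  then have "norm x \<le> 1 + t powr 2" "norm y \<le> 1 + t powr 2" using xy t by linarith+
  then show ?thesis using True by (simp add: psum_inf rexp_def)
next
  case False
  define P where "P = real_of_ereal p"
  have P1: "P > 1" using p False unfolding P_def by (cases p) auto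
  have r: "rexp p = P" using False by (simp add: rexp_def P_def)
  have "norm x powr P \<le> 1" using xy P1 by (intro powr_le1) auto
  moreover have "norm y powr P \<le> t powr P" using xy P1 by (intro powr_mono2) auto
  ultimately have K: "norm x powr P + norm y powr P \<le> 1 + t powr P" by simp
  have "psum_norm p (x, y) = (norm x powr P + norm y powr P) powr (1/P)"
    using psum_fin[OF False, of "(x,y)"] by (simp add: P_def)
  also have "\<dots> \<le> (1 + t powr P) powr (1/P)" using K P1 by (intro powr_mono2) auto
  also have "\<dots> \<le> (1 + t powr P) powr 1" using P1 by (intro powr_mono) auto
  also have "\<dots> = 1 + t powr P" by simp
  finally show ?thesis using r by simp
qed

lemma gsmall:
  fixes \<Phi> :: "'a::real_normed_vector \<times> 'b::real_normed_vector \<Rightarrow> real"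
  assumes p: "1 < p" and \<Phi>: "\<Phi> \<in> dual_ball (psum_norm p)" and x1: "norm x1 \<le> 1" "\<Phi> (x1, 0) > 1 - \<theta>"
    and t: "0 < t" "t \<le> 1" and y: "norm y \<le> 1"
  shows "\<bar>\<Phi> (0, y)\<bar> \<le> \<theta> / t + t powr (rexp p - 1)"
proof -
  have lin: "linear \<Phi>" and bd: "\<And>w. \<bar>\<Phi> w\<bar> \<le> psum_norm p w" using \<Phi> by (auto simp: dual_ball_def)
  have tr: "t powr rexp p = t powr (rexp p - 1) * t" using powr_aux2[of t "rexp p"] t by simp
  have one: "\<Phi> (0, y') < \<theta> / t + t powr (rexp p - 1)" if y': "norm y' \<le> 1" for y'
  proof -
    have "\<Phi> (x1, t *\<^sub>R y') = \<Phi> (x1, 0) + t * \<Phi> (0, y')"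
      using lin_split[OF lin, of "(x1, t *\<^sub>R y')"] linear_scale[OF lin_snd[OF lin], of t y'] by simp
    moreover have "\<Phi> (x1, t *\<^sub>R y') \<le> 1 + t powr rexp p"
    proof -
      have "norm (t *\<^sub>R y') \<le> t" using y' t by (simp add: mult_left_le)
      then have "psum_norm p (x1, t *\<^sub>R y') \<le> 1 + t powr rexp p" using psum_small[OF p x1(1) _ t] by blast
      then show ?thesis using bd[of "(x1, t *\<^sub>R y')"] by simp
    qed
    ultimately have "\<Phi> (0, y') * t < \<theta> + t powr (rexp p - 1) * t" using x1(2) tr by (simp add: mult.commute)
    then have "\<Phi> (0, y') < (\<theta> + t powr (rexp p - 1) * t) / t" using t by (simp add: pos_less_divide_eq)
    moreover have "(\<theta> + t powr (rexp p - 1) * t) / t = \<theta> / t + t powr (rexp p - 1)" using t by (simp add: field_simps)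
    ultimately show ?thesis by simp
  qed
  have "\<Phi> (0, -y) = - \<Phi> (0, y)" using linear_neg[OF lin_snd[OF lin]] by simp
  then show ?thesis using one[of y] one[of "-y"] y by (simp add: abs_le_iff)
qed

lemma gsmall_choice:
  fixes p :: ereal
  assumes p: "1 < p" and \<sigma>: "\<sigma> > 0"
  shows "\<exists>\<theta>>0. \<forall>\<Phi>::('a::real_normed_vector \<times> 'b::real_normed_vector \<Rightarrow> real). \<forall>x1 y.
     \<Phi> \<in> dual_ball (psum_norm p) \<longrightarrow> norm x1 \<le> 1 \<longrightarrow> \<Phi> (x1, 0) > 1 - \<theta> \<longrightarrow> norm y \<le> 1 \<longrightarrow> \<bar>\<Phi> (0, y)\<bar> \<le> \<sigma>"
proof -
  define r where "r = rexp p"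
  have r1: "r > 1" using rexp_gt1[OF p] by (simp add: r_def)
  define t where "t = min 1 ((\<sigma>/2) powr (1/(r-1)))"
  have t: "0 < t" "t \<le> 1" using \<sigma> by (auto simp: t_def)
  have "t powr (r - 1) \<le> ((\<sigma>/2) powr (1/(r-1))) powr (r - 1)"
    using t r1 by (intro powr_mono2) (auto simp: t_def)
  also have "\<dots> = \<sigma>/2" using r1 \<sigma> by (simp add: powr_powr)
  finally have tp: "t powr (r - 1) \<le> \<sigma>/2" .
  define \<theta> where "\<theta> = \<sigma> * t / 2"
  have \<theta>: "\<theta> > 0" using \<sigma> t by (simp add: \<theta>_def)
  have tt: "\<theta> / t = \<sigma>/2" using t by (simp add: \<theta>_def)
  have "\<bar>\<Phi> (0, y)\<bar> \<le> \<sigma>" if "\<Phi> \<in> dual_ball (psum_norm p)" "norm x1 \<le> 1" "\<Phi> (x1, 0) > 1 - \<theta>" "norm y \<le> 1"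
    for \<Phi> :: "'a \<times> 'b \<Rightarrow> real" and x1 y
    using gsmall[OF p that(1,2,3) t that(4)] tt tp unfolding r_def by simp
  then show ?thesis using \<theta> by blast
qed




lemma caseB_bound:
  fixes f0 g :: "'a::real_normed_vector \<Rightarrow> real"
  assumes f0: "f0 \<in> dual_ball norm"
    and B: "\<And>f. f \<in> dual_ball norm \<Longrightarrow> (\<forall>x\<in>F. \<bar>f x - f0 x\<bar> < e) \<Longrightarrow> (\<forall>x. norm x \<le> 1 \<longrightarrow> f x \<le> 1 - \<theta>)"
    and \<theta>: "0 < \<theta>" "\<theta> < 1"
    and g: "linear g" "\<And>x. \<bar>g x\<bar> \<le> 2 * norm x"
    and M: "M > 0" "\<And>x. x \<in> F \<Longrightarrow> \<bar>g x\<bar> \<le> M" and e: "e > 0"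
  shows "\<bar>g x\<bar> \<le> (4 * M / e) * norm x"
proof -
  have lf0: "linear f0" "\<And>x. \<bar>f0 x\<bar> \<le> 1 * norm x" using f0 by (auto simp: dual_ball_def)
  define c0 where "c0 = e / (2 * M)"
  have c0: "c0 > 0" using e M by (simp add: c0_def)
  define \<phi> where "\<phi> = (\<lambda>c. dual_norm norm (\<lambda>x. f0 x + c * g x))"
  have linc: "linear (\<lambda>x. f0 x + c * g x)" for c
    using lf0(1) g(1) unfolding linear_iff by (auto simp: algebra_simps)
  have bdc: "\<bar>f0 x + c * g x\<bar> \<le> (1 + \<bar>c\<bar> * 2) * norm x" for c x
  proof -
    have "\<bar>f0 x + c * g x\<bar> \<le> \<bar>f0 x\<bar> + \<bar>c\<bar> * \<bar>g x\<bar>" by (simp add: abs_mult abs_triangle_ineq[THEN order_trans])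
    also have "\<dots> \<le> 1 * norm x + \<bar>c\<bar> * (2 * norm x)" using lf0(2)[of x] g(2)[of x] by (intro add_mono mult_left_mono) auto
    finally show ?thesis by (simp add: algebra_simps)
  qed
  have cont: "continuous_on {0..c0} \<phi>" unfolding \<phi>_def by (rule dnn_cont[OF lf0 g])
  have small: "dual_norm norm f \<le> 1 - \<theta>" if "f \<in> dual_ball norm" "\<forall>x\<in>F. \<bar>f x - f0 x\<bar> < e" for f
  proof -
    have lf: "linear f" "\<And>x. \<bar>f x\<bar> \<le> 1 * norm x" using that(1) by (auto simp: dual_ball_def)
    have le: "\<forall>x. norm x \<le> 1 \<longrightarrow> f x \<le> 1 - \<theta>" using B[OF that] .
    show ?thesis
    proof (rule dn_least[of norm])
      show "norm (0::'a) \<le> 1" by simp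
      show "f 0 = 0" using linear_0[OF lf(1)] .
      fix x :: 'a assume x: "norm x \<le> 1"
      have "f (-x) = - f x" using linear_neg[OF lf(1)] by simp
      then show "\<bar>f x\<bar> \<le> 1 - \<theta>" using le x by (metis abs_le_iff neg_le_iff_le norm_minus_cancel)
    qed
  qed
  have \<phi>0: "\<phi> 0 \<le> 1 - \<theta>" unfolding \<phi>_def using small[OF f0] e by simp
  have \<phi>c0: "\<phi> c0 \<le> 1 - \<theta>"
  proof (rule ccontr)
    assume "\<not> \<phi> c0 \<le> 1 - \<theta>"
    define v where "v = (1 - \<theta> + min (\<phi> c0) 1) / 2"
    have v: "1 - \<theta> < v" "v \<le> 1" "v \<le> \<phi> c0" using \<open>\<not> \<phi> c0 \<le> 1 - \<theta>\<close> \<theta> by (auto simp: v_def min_def)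
    obtain c where c: "0 \<le> c" "c \<le> c0" "\<phi> c = v"
      using IVT'[of \<phi> 0 v c0, OF _ v(3) _ cont] \<phi>0 v(1) c0 by auto
    define f where "f = (\<lambda>x. f0 x + c * g x)"
    have fle: "\<bar>f x\<bar> \<le> \<phi> c * norm x" for x unfolding f_def \<phi>_def by (rule dnn_le[OF linc bdc])
    have "\<bar>f x\<bar> \<le> norm x" for x
    proof -
      have "\<phi> c * norm x \<le> 1 * norm x" using c(3) v(2) by (intro mult_right_mono) auto
      then show ?thesis using fle[of x] by simp
    qed
    then have fB: "f \<in> dual_ball norm" using linc by (simp add: dual_ball_def f_def)
    have "\<forall>x\<in>F. \<bar>f x - f0 x\<bar> < e"
    proof
      fix x assume "x \<in> F"
      have "\<bar>f x - f0 x\<bar> = c * \<bar>g x\<bar>" using c by (simp add: f_def abs_mult)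
      also have "\<dots> \<le> c0 * M" using M(2)[OF \<open>x \<in> F\<close>] c by (intro mult_mono) auto
      also have "\<dots> = e / 2" using M by (simp add: c0_def)
      also have "\<dots> < e" using e by simp
      finally show "\<bar>f x - f0 x\<bar> < e" .
    qed
    then have "\<phi> c \<le> 1 - \<theta>" using small[OF fB] by (simp add: \<phi>_def f_def)
    then show False using c v by simp
  qed
  have "\<bar>f0 x + c0 * g x\<bar> \<le> \<phi> c0 * norm x" unfolding \<phi>_def by (rule dnn_le[OF linc bdc])
  also have "\<dots> \<le> 1 * norm x" using \<phi>c0 \<theta> by (intro mult_right_mono) auto
  finally have h1: "\<bar>f0 x + c0 * g x\<bar> \<le> norm x" by simp
  have "c0 * \<bar>g x\<bar> = \<bar>(f0 x + c0 * g x) - f0 x\<bar>" using c0 by (simp add: abs_mult)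
  also have "\<dots> \<le> \<bar>f0 x + c0 * g x\<bar> + \<bar>f0 x\<bar>" by (rule abs_triangle_ineq4)
  also have "\<dots> \<le> 2 * norm x" using h1 lf0(2)[of x] by simp
  finally have "c0 * \<bar>g x\<bar> \<le> 2 * norm x" .
  then have "\<bar>g x\<bar> \<le> (2 / c0) * norm x" using c0 by (simp add: field_simps)
  then show ?thesis using M e by (simp add: c0_def)
qed

lemma ball_lift:
  assumes p1: "1 \<le> p" and fs: "fs \<in> dual_ball (norm :: 'a::real_normed_vector \<Rightarrow> real)"
  shows "(\<lambda>w::'a \<times> 'b::real_normed_vector. fs (fst w)) \<in> dual_ball (psum_norm p)"
proof -
  have lfs: "linear fs" "\<And>x. \<bar>fs x\<bar> \<le> norm x" using fs by (auto simp: dual_ball_def)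
  have "linear (\<lambda>w::'a \<times> 'b. fs (fst w))" using linear_compose[OF linear_fst lfs(1)] by (simp add: o_def)
  moreover have "\<bar>fs (fst w)\<bar> \<le> psum_norm p w" for w :: "'a \<times> 'b"
    using lfs(2)[of "fst w"] psum_ge(1)[OF p1, of w] by simp
  ultimately show ?thesis unfolding dual_ball_def by blast
qed

lemma part_c:
  fixes x0 :: "'a::real_normed_vector"
  assumes p: "1 < p" and d: "wstar_d2p (psum_norm p :: 'a \<times> 'b::real_normed_vector \<Rightarrow> real)" and x0: "x0 \<noteq> 0"
  shows "wstar_d2p (norm :: 'a \<Rightarrow> real)"
proof (rule d2p_intro)
  show "norm (0::'a) = 0" by simp
  fix f0 :: "'a \<Rightarrow> real" and F :: "'a set" and e \<eta> :: real
  assume f0: "f0 \<in> dual_ball norm" and F: "finite F" and e: "e > 0" and \<eta>: "\<eta> > 0"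
  have p1: "1 \<le> p" using p by simp
  define \<sigma> where "\<sigma> = min (1/4) (\<eta>/4)"
  have \<sigma>: "\<sigma> > 0" "\<sigma> \<le> 1/4" "\<sigma> \<le> \<eta>/4" using \<eta> by (auto simp: \<sigma>_def)
  obtain \<theta>0 where \<theta>0: "\<theta>0 > 0" and Gs: "\<And>\<Phi> x1 y. \<Phi> \<in> dual_ball (psum_norm p :: 'a \<times> 'b \<Rightarrow> real) \<Longrightarrow> norm x1 \<le> 1
      \<Longrightarrow> \<Phi> (x1, 0) > 1 - \<theta>0 \<Longrightarrow> norm y \<le> 1 \<Longrightarrow> \<bar>\<Phi> (0, y)\<bar> \<le> \<sigma>"
    using gsmall_choice[OF p \<sigma>(1), where 'a='a and 'b='b] by blast
  define \<theta> where "\<theta> = min (\<theta>0/2) (1/2)"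
  have \<theta>: "0 < \<theta>" "\<theta> < 1" "2 * \<theta> \<le> \<theta>0" using \<theta>0 by (auto simp: \<theta>_def)
  have N0: "psum_norm p (0::'a\<times>'b) = 0" by (rule psum_0[OF p1])
  show "\<exists>f1\<in>dual_ball norm. \<exists>f2\<in>dual_ball norm. (\<forall>x\<in>F. \<bar>f1 x - f0 x\<bar> < e \<and> \<bar>f2 x - f0 x\<bar> < e)
          \<and> (\<exists>z. norm z \<le> 1 \<and> f1 z - f2 z > 2 - \<eta>)"
  proof (cases "\<exists>fs\<in>dual_ball norm. (\<forall>x\<in>F. \<bar>fs x - f0 x\<bar> < e) \<and> (\<exists>xs. norm xs \<le> 1 \<and> fs xs > 1 - \<theta>)")
    case True
    then obtain fs xs where fs: "fs \<in> dual_ball norm" "\<forall>x\<in>F. \<bar>fs x - f0 x\<bar> < e"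
      and xs: "norm xs \<le> 1" "fs xs > 1 - \<theta>" by blast
    define \<Psi> where "\<Psi> = (\<lambda>w::'a\<times>'b. fs (fst w))"
    have \<Psi>b: "\<Psi> \<in> dual_ball (psum_norm p)" unfolding \<Psi>_def by (rule ball_lift[OF p1 fs(1)])
    define e1 where "e1 = Min (insert \<theta> ((\<lambda>x. e - \<bar>fs x - f0 x\<bar>) ` F))"
    have e1: "e1 > 0" unfolding e1_def using F fs(2) \<theta> by (subst Min_gr_iff) auto
    have e1t: "e1 \<le> \<theta>" unfolding e1_def using F by (intro Min_le) auto
    have e1F: "e1 \<le> e - \<bar>fs x - f0 x\<bar>" if "x \<in> F" for x unfolding e1_def using F that by (intro Min_le) auto
    define F' where "F' = (\<lambda>x. (x, 0::'b)) ` insert xs F"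
    have F': "finite F'" using F by (simp add: F'_def)
    have \<eta>2: "\<eta>/2 > 0" using \<eta> by simp
    obtain \<Phi>1 \<Phi>2 z where \<Phi>: "\<Phi>1 \<in> dual_ball (psum_norm p)" "\<Phi>2 \<in> dual_ball (psum_norm p)"
      "\<forall>w\<in>F'. \<bar>\<Phi>1 w - \<Psi> w\<bar> < e1 \<and> \<bar>\<Phi>2 w - \<Psi> w\<bar> < e1"
      and z: "psum_norm p z \<le> 1" "\<Phi>1 z - \<Phi>2 z > 2 - \<eta>/2"
      using d2p_elim[OF d N0 \<Psi>b F' e1 \<eta>2] by blast
    define f1 where "f1 = (\<lambda>x. \<Phi>1 (x, 0))"
    define f2 where "f2 = (\<lambda>x. \<Phi>2 (x, 0))"
    have f1b: "f1 \<in> dual_ball norm" unfolding f1_def by (rule ball_fst[OF p1 \<Phi>(1)])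
    have f2b: "f2 \<in> dual_ball norm" unfolding f2_def by (rule ball_fst[OF p1 \<Phi>(2)])
    have cl: "\<bar>f1 x - fs x\<bar> < e1 \<and> \<bar>f2 x - fs x\<bar> < e1" if "x \<in> insert xs F" for x
    proof -
      have "(x, 0::'b) \<in> F'" using that unfolding F'_def by blast
      from bspec[OF \<Phi>(3) this] show ?thesis by (simp add: f1_def f2_def \<Psi>_def)
    qed
    have near: "\<forall>x\<in>F. \<bar>f1 x - f0 x\<bar> < e \<and> \<bar>f2 x - f0 x\<bar> < e"
    proof
      fix x assume x: "x \<in> F"
      have "\<bar>f1 x - f0 x\<bar> \<le> \<bar>f1 x - fs x\<bar> + \<bar>fs x - f0 x\<bar>" by linarith
      moreover have "\<bar>f2 x - f0 x\<bar> \<le> \<bar>f2 x - fs x\<bar> + \<bar>fs x - f0 x\<bar>" by linarith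
      ultimately show "\<bar>f1 x - f0 x\<bar> < e \<and> \<bar>f2 x - f0 x\<bar> < e" using cl[of x] e1F[OF x] x by auto
    qed
    have big: "\<Phi>1 (xs, 0) > 1 - \<theta>0" "\<Phi>2 (xs, 0) > 1 - \<theta>0"
      using cl[of xs] xs(2) e1t \<theta>(3) by (auto simp: f1_def f2_def)
    have nz: "norm (fst z) \<le> 1" "norm (snd z) \<le> 1" using psum_ge[OF p1, of z] z(1) by auto
    have s1: "\<bar>\<Phi>1 (0, snd z)\<bar> \<le> \<sigma>" by (rule Gs[OF \<Phi>(1) xs(1) big(1) nz(2)])
    have s2: "\<bar>\<Phi>2 (0, snd z)\<bar> \<le> \<sigma>" by (rule Gs[OF \<Phi>(2) xs(1) big(2) nz(2)])
    have l1: "linear \<Phi>1" "linear \<Phi>2" using \<Phi>(1,2) by (auto simp: dual_ball_def)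
    have "\<Phi>1 z = f1 (fst z) + \<Phi>1 (0, snd z)" using lin_split[OF l1(1), of z] by (simp add: f1_def)
    moreover have "\<Phi>2 z = f2 (fst z) + \<Phi>2 (0, snd z)" using lin_split[OF l1(2), of z] by (simp add: f2_def)
    ultimately have "f1 (fst z) - f2 (fst z) > 2 - \<eta>"
      using z(2) s1 s2 \<sigma>(3) by (simp add: abs_le_iff)
    then show ?thesis using near f1b f2b nz(1) by blast
  next
    case False
    then have B: "\<And>f. f \<in> dual_ball norm \<Longrightarrow> (\<forall>x\<in>F. \<bar>f x - f0 x\<bar> < e) \<Longrightarrow> (\<forall>x. norm x \<le> 1 \<longrightarrow> f x \<le> 1 - \<theta>)"
      by (meson not_le)
    obtain u where u: "linear u" "\<forall>x. \<bar>u x\<bar> \<le> norm x" "u x0 = norm x0" using hahn_banach_norm[OF x0] by blast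
    have ub: "u \<in> dual_ball norm" using u by (simp add: dual_ball_def)
    define x1 where "x1 = (1 / norm x0) *\<^sub>R x0"
    have x1: "norm x1 = 1" "u x1 = 1" using x0 u by (simp_all add: x1_def linear_scale)
    define \<Psi> where "\<Psi> = (\<lambda>w::'a\<times>'b. u (fst w))"
    have \<Psi>b: "\<Psi> \<in> dual_ball (psum_norm p)" unfolding \<Psi>_def by (rule ball_lift[OF p1 ub])
    define \<delta> where "\<delta> = e / 32"
    have \<delta>: "\<delta> > 0" using e by (simp add: \<delta>_def)
    define e2 where "e2 = min \<delta> \<theta>"
    have e2: "e2 > 0" "e2 \<le> \<delta>" "e2 \<le> \<theta>" using \<delta> \<theta> by (auto simp: e2_def)
    define F' where "F' = (\<lambda>x. (x, 0::'b)) ` insert x1 F"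
    have F': "finite F'" using F by (simp add: F'_def)
    have h2: "(1/2::real) > 0" by simp
    obtain \<Phi>1 \<Phi>2 z where \<Phi>: "\<Phi>1 \<in> dual_ball (psum_norm p)" "\<Phi>2 \<in> dual_ball (psum_norm p)"
      "\<forall>w\<in>F'. \<bar>\<Phi>1 w - \<Psi> w\<bar> < e2 \<and> \<bar>\<Phi>2 w - \<Psi> w\<bar> < e2"
      and z: "psum_norm p z \<le> 1" "\<Phi>1 z - \<Phi>2 z > 2 - 1/2"
      using d2p_elim[OF d N0 \<Psi>b F' e2(1) h2] by blast
    define f1 where "f1 = (\<lambda>x. \<Phi>1 (x, 0))"
    define f2 where "f2 = (\<lambda>x. \<Phi>2 (x, 0))"
    have f1b: "f1 \<in> dual_ball norm" unfolding f1_def by (rule ball_fst[OF p1 \<Phi>(1)])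
    have f2b: "f2 \<in> dual_ball norm" unfolding f2_def by (rule ball_fst[OF p1 \<Phi>(2)])
    have cl: "\<bar>f1 x - u x\<bar> < e2 \<and> \<bar>f2 x - u x\<bar> < e2" if "x \<in> insert x1 F" for x
    proof -
      have "(x, 0::'b) \<in> F'" using that unfolding F'_def by blast
      from bspec[OF \<Phi>(3) this] show ?thesis by (simp add: f1_def f2_def \<Psi>_def)
    qed
    define g where "g = (\<lambda>x. f1 x - f2 x)"
    have lg: "linear g" using f1b f2b unfolding g_def dual_ball_def linear_iff by (auto simp: algebra_simps)
    have bg: "\<bar>g x\<bar> \<le> 2 * norm x" for x
      using f1b f2b unfolding g_def dual_ball_def by (smt (verit) mem_Collect_eq)
    have Mg: "\<bar>g x\<bar> \<le> 2 * \<delta>" if "x \<in> F" for x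
    proof -
      have "\<bar>g x\<bar> \<le> \<bar>f1 x - u x\<bar> + \<bar>f2 x - u x\<bar>" unfolding g_def by linarith
      then show ?thesis using cl[of x] that e2(2) by auto
    qed
    have gb: "\<bar>g x\<bar> \<le> (4 * (2 * \<delta>) / e) * norm x" for x
      by (rule caseB_bound[OF f0 B \<theta>(1,2) lg bg _ Mg e]) (use \<delta> in auto)
    have big: "\<Phi>1 (x1, 0) > 1 - \<theta>0" "\<Phi>2 (x1, 0) > 1 - \<theta>0"
      using cl[of x1] x1(2) e2(3) \<theta>(3) \<theta>(1) by (auto simp: f1_def f2_def)
    have nx1: "norm x1 \<le> 1" using x1 by simp
    have nz: "norm (fst z) \<le> 1" "norm (snd z) \<le> 1" using psum_ge[OF p1, of z] z(1) by auto
    have s1: "\<bar>\<Phi>1 (0, snd z)\<bar> \<le> \<sigma>" by (rule Gs[OF \<Phi>(1) nx1 big(1) nz(2)])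
    have s2: "\<bar>\<Phi>2 (0, snd z)\<bar> \<le> \<sigma>" by (rule Gs[OF \<Phi>(2) nx1 big(2) nz(2)])
    have l1: "linear \<Phi>1" "linear \<Phi>2" using \<Phi>(1,2) by (auto simp: dual_ball_def)
    have "\<Phi>1 z - \<Phi>2 z = g (fst z) + \<Phi>1 (0, snd z) - \<Phi>2 (0, snd z)"
      using lin_split[OF l1(1), of z] lin_split[OF l1(2), of z] by (simp add: g_def f1_def f2_def)
    moreover have "\<bar>g (fst z)\<bar> \<le> 1/4"
    proof -
      have "\<bar>g (fst z)\<bar> \<le> (4 * (2 * \<delta>) / e) * norm (fst z)" by (rule gb)
      also have "\<dots> = norm (fst z) / 4" using e by (simp add: \<delta>_def)
      also have "\<dots> \<le> 1/4" using nz(1) by simp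
      finally show ?thesis .
    qed
    ultimately have "\<Phi>1 z - \<Phi>2 z \<le> 3/4" using s1 s2 \<sigma>(2) by (simp add: abs_le_iff) linarith
    then show ?thesis using z(2) by simp
  qed
qed



theorem corollary4p7:
  fixes x0 :: "'a::banach" and y0 :: "'b::banach"
  assumes "x0 \<noteq> 0" and "y0 \<noteq> 0"
  shows "(wstar_d2p (norm :: 'a \<Rightarrow> real) \<longrightarrow>
            wstar_d2p (psum_norm 1 :: 'a \<times> 'b \<Rightarrow> real))
       \<and> (\<forall>p::ereal. 1 < p \<and> wstar_d2p (norm :: 'a \<Rightarrow> real) \<and> wstar_d2p (norm :: 'b \<Rightarrow> real)
            \<longrightarrow> wstar_d2p (psum_norm p :: 'a \<times> 'b \<Rightarrow> real))
       \<and> (\<forall>p::ereal. 1 < p \<and> wstar_d2p (psum_norm p :: 'a \<times> 'b \<Rightarrow> real)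
            \<longrightarrow> wstar_d2p (norm :: 'a \<Rightarrow> real))"
proof (intro conjI allI impI)
  assume "wstar_d2p (norm :: 'a \<Rightarrow> real)"
  then show "wstar_d2p (psum_norm 1 :: 'a \<times> 'b \<Rightarrow> real)" by (rule part_a)
next
  fix p :: ereal
  assume h: "1 < p \<and> wstar_d2p (norm :: 'a \<Rightarrow> real) \<and> wstar_d2p (norm :: 'b \<Rightarrow> real)"
  show "wstar_d2p (psum_norm p :: 'a \<times> 'b \<Rightarrow> real)"
  proof (cases "p = \<infinity>")
    case True then show ?thesis using part_b_inf h by blast
  next
    case False then show ?thesis using part_b_fin h by blast
  qed
next
  fix p :: ereal
  assume h: "1 < p \<and> wstar_d2p (psum_norm p :: 'a \<times> 'b \<Rightarrow> real)"
  then show "wstar_d2p (norm :: 'a \<Rightarrow> real)" using part_c[OF _ _ assms(1)] by blast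
qed

end
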